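(* Let $c>0$ and $T_M=\varepsilon$. Then for $\varepsilon<\varepsilon_0$ small enough there exist constants $A>0$ and $c_0\in(0,1)$ and a unique solution $f\in C^{2,1/2}(\mathbb R_+)$ of $$f''(y)-cf'(y)-f^4(y)=-\int_0^\infty E(y-\eta)f^4(\eta)d\eta\ (y>0),\qquad f(0)=T_M,\qquad f\ge0,$$ such that $\lim_{y\to\infty}f(y)=f_\infty$ exists and $|f(y)-f_\infty|\le Ae^{-y/2}$ for all $y\ge0$. Moreover $f(y)\ge c_0\varepsilon$ for all $y\ge0$ and $f_\infty\ge c_0\varepsilon$.
   Context: $E(x)=\frac12\int_{|x|}^\infty\frac{e^{-t}}{t}dt$; $\mathbb R_+=[0,\infty)$; $C^{2,1/2}(\mathbb R_+)$ is the space of $C^2$ functions with bounded derivatives up to order 2 and bounded $1/2$-Hölder seminorm of the second derivative. *)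

theory Defs
  imports "HOL-Analysis.Analysis"
begin

text \<open>Kernel E(x) = 1/2 * int_{|x|}^infty e^{-t}/t dt (Lebesgue integral; at x = 0 the
  integral diverges and the Bochner convention gives 0, which is irrelevant since
  {0} is a null set).\<close>
definition E :: "real \<Rightarrow> real" where
  "E x = (1/2) * (LINT t:{\<bar>x\<bar><..}|lborel. exp (- t) / t)"

definition C2half :: "(real \<Rightarrow> real) \<Rightarrow> bool" where
  "C2half f \<longleftrightarrow> (\<exists>f1 f2.
     (\<forall>y\<ge>0. (f has_real_derivative f1 y) (at y within {0..})) \<and>
     (\<forall>y\<ge>0. (f1 has_real_derivative f2 y) (at y within {0..})) \<and>
     continuous_on {0..} f2 \<and>
     bounded (f ` {0..}) \<and> bounded (f1 ` {0..}) \<and> bounded (f2 ` {0..}) \<and>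
     (\<exists>H. \<forall>x\<ge>0. \<forall>y\<ge>0. \<bar>f2 x - f2 y\<bar> \<le> H * sqrt \<bar>x - y\<bar>))"

definition solves_bvp :: "real \<Rightarrow> real \<Rightarrow> (real \<Rightarrow> real) \<Rightarrow> bool" where
  "solves_bvp c eps f \<longleftrightarrow> C2half f \<and>
     (\<forall>y>0. deriv (deriv f) y - c * deriv f y - f y ^ 4
             = - (LINT \<eta>:{0..}|lborel. E (y - \<eta>) * f \<eta> ^ 4)) \<and>
     f 0 = eps \<and> (\<forall>y\<ge>0. f y \<ge> 0)"

definition exp_decay :: "real \<Rightarrow> (real \<Rightarrow> real) \<Rightarrow> real \<Rightarrow> bool" where
  "exp_decay A f L \<longleftrightarrow> (f \<longlongrightarrow> L) at_top \<and>
     (\<forall>y\<ge>0. \<bar>f y - L\<bar> \<le> A * exp (- y / 2))"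

end

theory Submission
  imports Defs
begin

lemma nn_exp_atLeast:
  fixes a b :: real assumes "a > 0"
  shows "(\<integral>\<^sup>+t. ennreal (exp (-a*t)) * indicator {b..} t \<partial>lborel) = ennreal (exp (-a*b) / a)"
proof -
  have "(\<integral>\<^sup>+t. ennreal (exp (-a*t)) * indicator {b..} t \<partial>lborel) = ennreal (0 - (- exp (-a*b)/a))"
  proof (rule nn_integral_FTC_atLeast)
    show "((\<lambda>x. - exp (-a*x)/a) \<longlongrightarrow> 0) at_top"
      using assms by real_asymp
    fix x show "DERIV (\<lambda>x. - exp (-a*x)/a) x :> exp (-a*x)"
      using assms by (auto intro!: derivative_eq_intros)
  qed auto
  then show ?thesis by simp
qed

lemma exp_atLeast_integral:
  fixes a b :: real assumes "a > 0"
  shows "set_integrable lborel {b..} (\<lambda>t. exp (-a*t))"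
    "(LINT t:{b..}|lborel. exp (-a*t)) = exp (-a*b) / a"
proof -
  have h: "has_bochner_integral lborel (\<lambda>t. indicator {b..} t * exp (-a*t)) (exp (-a*b) / a)"
  proof (rule has_bochner_integral_nn_integral)
    show "(\<integral>\<^sup>+t. ennreal (indicator {b..} t * exp (-a*t)) \<partial>lborel) = ennreal (exp (-a*b) / a)"
    proof -
      have "\<And>t. ennreal (indicator {b..} t * exp (-a*t)) = ennreal (exp (-a*t)) * indicator {b..} t"
        by (auto simp: indicator_def)
      then show ?thesis using nn_exp_atLeast[OF assms, of b] by simp
    qed
  qed (use assms in auto)
  then show "set_integrable lborel {b..} (\<lambda>t. exp (-a*t))"
    "(LINT t:{b..}|lborel. exp (-a*t)) = exp (-a*b) / a"
    using h[unfolded has_bochner_integral_iff]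
    unfolding set_integrable_def set_lebesgue_integral_def by simp_all
qed

definition kk :: "real \<Rightarrow> real \<Rightarrow> real" where
  "kk x t = indicator {\<bar>x\<bar><..} t * (exp (-t) / (2*t))"

lemma kk_nonneg: "0 \<le> kk x t"
  by (auto simp: kk_def indicator_def)

lemma kk_meas_gen[measurable]:
  assumes [measurable]: "f \<in> borel_measurable M" "g \<in> borel_measurable M"
  shows "(\<lambda>p. kk (f p) (g p)) \<in> borel_measurable M"
proof -
  have e: "(\<lambda>p. kk (f p) (g p)) = (\<lambda>p. if \<bar>f p\<bar> < g p then exp (- g p) / (2 * g p) else 0)"
    by (auto simp: kk_def indicator_def fun_eq_iff)
  have "(\<lambda>p. exp (- g p) / (2 * g p)) \<in> borel_measurable M"
    by (intro borel_measurable_divide) measurable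
  then show ?thesis unfolding e by measurable
qed

lemma kk_meas: "(\<lambda>p. kk (fst p) (snd p)) \<in> borel_measurable (lborel \<Otimes>\<^sub>M lborel)"
  by measurable

lemma kk_meas1[measurable]: "kk x \<in> borel_measurable borel"
  unfolding kk_def by measurable

lemma kk_integrable:
  assumes "x \<noteq> 0" shows "integrable lborel (kk x)"
proof (rule Bochner_Integration.integrable_bound)
  show "integrable lborel (\<lambda>t. indicator {0..} t * exp (-1*t) / (2*\<bar>x\<bar>))"
    using exp_atLeast_integral(1)[of 1 0] unfolding set_integrable_def
    by (intro integrable_divide) simp
  show "kk x \<in> borel_measurable lborel"
    unfolding kk_def by measurable
  show "AE t in lborel. norm (kk x t) \<le> norm (indicator {0..} t * exp (-1*t) / (2*\<bar>x\<bar>))"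
  proof (rule AE_I2)
    fix t
    show "norm (kk x t) \<le> norm (indicator {0..} t * exp (-1*t) / (2*\<bar>x\<bar>))"
    proof (cases "\<bar>x\<bar> < t")
      case True
      then have "exp (-t) / (2*t) \<le> exp (-t) / (2*\<bar>x\<bar>)"
        using assms by (intro divide_left_mono) auto
      then show ?thesis using True by (auto simp: kk_def indicator_def)
    qed (auto simp: kk_def indicator_def)
  qed
qed

lemma E_eq_kk: "x \<noteq> 0 \<Longrightarrow> E x = integral\<^sup>L lborel (kk x)"
  unfolding E_def kk_def set_lebesgue_integral_def
  by (simp add: integral_mult_right_zero[symmetric] mult_ac)

lemma E_nonneg: "0 \<le> E x"
  unfolding E_def set_lebesgue_integral_def
  by (auto intro!: Bochner_Integration.integral_nonneg simp: indicator_def)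

lemma ennreal_E: "x \<noteq> 0 \<Longrightarrow> ennreal (E x) = (\<integral>\<^sup>+t. ennreal (kk x t) \<partial>lborel)"
  using E_eq_kk kk_integrable kk_nonneg by (simp add: nn_integral_eq_integral)

lemma E_tonelli:
  assumes [measurable]: "\<phi> \<in> borel_measurable borel"
  shows "(\<integral>\<^sup>+x. ennreal (E x) * \<phi> x \<partial>lborel) =
    (\<integral>\<^sup>+t. ennreal (indicator {0<..} t * (exp (-t) / (2*t))) *
         (\<integral>\<^sup>+x. indicator {-t<..<t} x * \<phi> x \<partial>lborel) \<partial>lborel)"
proof -
  have "(\<integral>\<^sup>+x. ennreal (E x) * \<phi> x \<partial>lborel) = (\<integral>\<^sup>+x. (\<integral>\<^sup>+t. ennreal (kk x t) \<partial>lborel) * \<phi> x \<partial>lborel)"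
    by (intro nn_integral_cong_AE eventually_mono[OF AE_lborel_singleton[of 0]]) (simp add: ennreal_E)
  also have "\<dots> = (\<integral>\<^sup>+x. (\<integral>\<^sup>+t. ennreal (kk x t) * \<phi> x \<partial>lborel) \<partial>lborel)"
    by (intro nn_integral_cong nn_integral_multc[symmetric]) measurable
  also have "\<dots> = (\<integral>\<^sup>+t. (\<integral>\<^sup>+x. ennreal (kk x t) * \<phi> x \<partial>lborel) \<partial>lborel)"
  proof (rule lborel_pair.Fubini'[symmetric])
    have "(\<lambda>p. ennreal (kk (fst p) (snd p)) * \<phi> (fst p)) \<in> borel_measurable (lborel \<Otimes>\<^sub>M lborel)"
      by measurable
    then show "(\<lambda>(x, t). ennreal (kk x t) * \<phi> x) \<in> borel_measurable (lborel \<Otimes>\<^sub>M lborel)"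
      by (simp add: case_prod_unfold)
  qed
  also have "\<dots> = (\<integral>\<^sup>+t. ennreal (indicator {0<..} t * (exp (-t) / (2*t))) *
         (\<integral>\<^sup>+x. indicator {-t<..<t} x * \<phi> x \<partial>lborel) \<partial>lborel)"
  proof (rule nn_integral_cong)
    fix t :: real
    have "\<And>x. ennreal (kk x t) * \<phi> x = ennreal (indicator {0<..} t * (exp (-t) / (2*t))) * (indicator {-t<..<t} x * \<phi> x)"
      by (auto simp: kk_def indicator_def)
    then show "(\<integral>\<^sup>+x. ennreal (kk x t) * \<phi> x \<partial>lborel) = ennreal (indicator {0<..} t * (exp (-t) / (2*t))) *
         (\<integral>\<^sup>+x. indicator {-t<..<t} x * \<phi> x \<partial>lborel)"
      by (simp add: nn_integral_cmult)
  qed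
  finally show ?thesis .
qed

lemma E_meas[measurable]: "E \<in> borel_measurable borel"
proof -
  have m: "(\<lambda>x. integral\<^sup>L lborel (kk x)) \<in> borel_measurable lborel"
  proof (rule lborel.borel_measurable_lebesgue_integral)
    show "case_prod kk \<in> borel_measurable (lborel \<Otimes>\<^sub>M lborel)"
      using kk_meas by (simp add: case_prod_unfold)
  qed
  have e: "E = (\<lambda>x. if x = 0 then E 0 else integral\<^sup>L lborel (kk x))"
    by (auto simp: fun_eq_iff E_eq_kk)
  have "(\<lambda>x. if x = 0 then E 0 else integral\<^sup>L lborel (kk x)) \<in> borel_measurable borel"
    using m by (simp add: measurable_lborel1)
  then show ?thesis by (subst e)
qed

lemma inner_le:
  fixes \<psi> :: "real \<Rightarrow> real"
  assumes "t \<ge> 0" and "\<And>x. -t < x \<Longrightarrow> x < t \<Longrightarrow> \<psi> x \<le> B"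
  shows "(\<integral>\<^sup>+x. indicator {-t<..<t} x * ennreal (\<psi> x) \<partial>lborel) \<le> ennreal (2*t*B)"
proof -
  have "(\<integral>\<^sup>+x. indicator {-t<..<t} x * ennreal (\<psi> x) \<partial>lborel) \<le> (\<integral>\<^sup>+x. ennreal B * indicator {-t<..<t} x \<partial>lborel)"
    using assms by (intro nn_integral_mono) (auto simp: indicator_def intro: ennreal_leI)
  also have "\<dots> = ennreal B * ennreal (2*t)"
    using assms by (simp add: nn_integral_cmult_indicator)
  also have "\<dots> \<le> ennreal (2*t*B)"
    using assms by (cases "B \<ge> 0") (auto simp: ennreal_mult'[symmetric] mult_ac ennreal_neg)
  finally show ?thesis .
qed

lemma E_weight_nn: "(\<integral>\<^sup>+x. ennreal (E x) * ennreal (exp (\<bar>x\<bar>/2)) \<partial>lborel) \<le> 2"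
proof -
  have "(\<integral>\<^sup>+x. ennreal (E x) * ennreal (exp (\<bar>x\<bar>/2)) \<partial>lborel) =
    (\<integral>\<^sup>+t. ennreal (indicator {0<..} t * (exp (-t) / (2*t))) *
         (\<integral>\<^sup>+x. indicator {-t<..<t} x * ennreal (exp (\<bar>x\<bar>/2)) \<partial>lborel) \<partial>lborel)"
    by (rule E_tonelli) measurable
  also have "\<dots> \<le> (\<integral>\<^sup>+t. ennreal (exp (-(1/2)*t)) * indicator {0..} t \<partial>lborel)"
  proof (rule nn_integral_mono)
    fix t :: real
    show "ennreal (indicator {0<..} t * (exp (-t) / (2*t))) *
         (\<integral>\<^sup>+x. indicator {-t<..<t} x * ennreal (exp (\<bar>x\<bar>/2)) \<partial>lborel)
       \<le> ennreal (exp (-(1/2)*t)) * indicator {0..} t"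
    proof (cases "t > 0")
      case True
      have "(\<integral>\<^sup>+x. indicator {-t<..<t} x * ennreal (exp (\<bar>x\<bar>/2)) \<partial>lborel) \<le> ennreal (2*t*exp (t/2))"
        using True by (intro inner_le) auto
      then have "ennreal (indicator {0<..} t * (exp (-t) / (2*t))) *
         (\<integral>\<^sup>+x. indicator {-t<..<t} x * ennreal (exp (\<bar>x\<bar>/2)) \<partial>lborel)
         \<le> ennreal (exp (-t) / (2*t)) * ennreal (2*t*exp (t/2))"
        using True by (auto intro: mult_left_mono)
      also have "\<dots> = ennreal (exp (-(1/2)*t))"
        using True by (simp add: ennreal_mult'[symmetric] exp_add[symmetric])
      finally show ?thesis using True by simp
    qed auto
  qed
  also have "\<dots> = 2"
    using nn_exp_atLeast[of "1/2" 0] by simp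
  finally show ?thesis .
qed

lemma E_nn_one: "(\<integral>\<^sup>+x. ennreal (E x) \<partial>lborel) = 1"
proof -
  have "(\<integral>\<^sup>+x. ennreal (E x) \<partial>lborel) = (\<integral>\<^sup>+x. ennreal (E x) * 1 \<partial>lborel)" by simp
  also have "\<dots> = (\<integral>\<^sup>+t. ennreal (indicator {0<..} t * (exp (-t) / (2*t))) *
         (\<integral>\<^sup>+x. indicator {-t<..<t} x * 1 \<partial>lborel) \<partial>lborel)"
    by (rule E_tonelli) measurable
  also have "\<dots> = (\<integral>\<^sup>+t. ennreal (exp (-1*t)) * indicator {0..} t \<partial>lborel)"
  proof (rule nn_integral_cong_AE)
    show "AE t in lborel. ennreal (indicator {0<..} t * (exp (-t) / (2*t))) *
         (\<integral>\<^sup>+x. indicator {-t<..<t} x * 1 \<partial>lborel) = ennreal (exp (-1*t)) * indicator {0..} t"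
    proof (rule eventually_mono[OF AE_lborel_singleton[of 0]])
      fix t :: real assume "t \<noteq> 0"
      show "ennreal (indicator {0<..} t * (exp (-t) / (2*t))) *
         (\<integral>\<^sup>+x. indicator {-t<..<t} x * 1 \<partial>lborel) = ennreal (exp (-1*t)) * indicator {0..} t"
      proof (cases "t > 0")
        case True
        then have "(\<integral>\<^sup>+x. indicator {-t<..<t} x * 1 \<partial>lborel) = ennreal (2*t)" by simp
        then show ?thesis using True by (simp add: ennreal_mult'[symmetric])
      next
        case False then show ?thesis using \<open>t \<noteq> 0\<close> by (simp add: indicator_def)
      qed
    qed
  qed
  also have "\<dots> = 1"
    using nn_exp_atLeast[of 1 0] by simp
  finally show ?thesis .
qed

lemma E_integrable: "integrable lborel E"
  by (rule integrableI_nonneg) (auto simp: E_nonneg E_nn_one)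

lemma E_integral: "integral\<^sup>L lborel E = 1"
  using E_nn_one E_integrable E_nonneg by (simp add: integral_eq_nn_integral)

lemma E_weight_integrable: "integrable lborel (\<lambda>x. E x * exp (\<bar>x\<bar>/2))"
proof (rule integrableI_nonneg)
  show "(\<integral>\<^sup>+x. ennreal (E x * exp (\<bar>x\<bar>/2)) \<partial>lborel) < \<infinity>"
    using E_weight_nn by (simp add: ennreal_mult'' E_nonneg) (metis ennreal_numeral ennreal_less_top le_less_trans top.not_eq_extremum)
qed (auto simp: E_nonneg)

lemma E_weight_integral: "integral\<^sup>L lborel (\<lambda>x. E x * exp (\<bar>x\<bar>/2)) \<le> 2"
proof -
  have "ennreal (integral\<^sup>L lborel (\<lambda>x. E x * exp (\<bar>x\<bar>/2))) = (\<integral>\<^sup>+x. ennreal (E x * exp (\<bar>x\<bar>/2)) \<partial>lborel)"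
    using E_weight_integrable by (simp add: nn_integral_eq_integral E_nonneg)
  also have "\<dots> \<le> 2"
    using E_weight_nn by (simp add: ennreal_mult'' E_nonneg)
  finally show ?thesis
    using ennreal_le_iff[of 2 "integral\<^sup>L lborel (\<lambda>x. E x * exp (\<bar>x\<bar>/2))"] by simp
qed


lemma powr_part: "(\<integral>\<^sup>+t. ennreal (indicator {0..1} t * t powr (-(1/2))) \<partial>lborel) = 2"
proof -
  have h0: "((\<lambda>t::real. t powr (-(1/2))) has_integral (1 powr (-(1/2)+1) / (-(1/2)+1))) {0..1}"
    by (rule has_integral_powr_from_0) simp_all
  have e2: "(1::real) powr (-(1/2)+1) / (-(1/2)+1) = 2" by simp
  have h1: "((\<lambda>t::real. if t \<in> {0..1} then t powr (-(1/2)) else 0) has_integral 2) UNIV"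
    using h0 unfolding e2 by (rule has_integral_restrict_UNIV[THEN iffD2])
  have e3: "(\<lambda>t::real. indicator {0..1} t * t powr (-(1/2))) = (\<lambda>t. if t \<in> {0..1} then t powr (-(1/2)) else 0)"
    by (rule ext) (simp add: indicator_def)
  have h: "((\<lambda>t::real. indicator {0..1} t * t powr (-(1/2))) has_integral 2) UNIV"
    unfolding e3 by (rule h1)
  have m: "(\<lambda>t::real. indicator {0..1} t * t powr (-(1/2))) \<in> borel_measurable borel"
    by measurable
  have nn: "\<And>t::real. 0 \<le> indicator {0..1} t * t powr (-(1/2))"
    by (simp add: indicator_def)
  have "integral\<^sup>N lborel (\<lambda>t. ennreal (indicator {0..1} t * t powr (-(1/2)))) = ennreal 2"
    by (rule nn_integral_has_integral_lborel[OF m nn h])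
  then show ?thesis by simp
qed

lemma ind_diff_le:
  assumes "A - B \<subseteq> C1" "B - A \<subseteq> C2"
  shows "ennreal \<bar>indicator A x - indicator B x\<bar> \<le> indicator C1 x + indicator C2 x"
proof (cases "x \<in> A"; cases "x \<in> B")
qed (use assms in \<open>auto simp: indicator_def\<close>)

lemma sym_diff_nn:
  fixes t d :: real assumes "t > 0" "d \<ge> 0"
  shows "(\<integral>\<^sup>+x. ennreal \<bar>indicator {-t-d<..<t-d} x - indicator {-t<..<t} x\<bar> \<partial>lborel)
     \<le> ennreal (2 * min d (2*t))"
proof (cases "d \<le> 2*t")
  case True
  have s1: "{-t-d<..<t-d} - {-t<..<t} \<subseteq> {-t-d<..-t}" using assms by auto
  have s2: "{-t<..<t} - {-t-d<..<t-d} \<subseteq> {t-d..<t}" using assms by auto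
  have "(\<integral>\<^sup>+x. ennreal \<bar>indicator {-t-d<..<t-d} x - indicator {-t<..<t} x\<bar> \<partial>lborel)
     \<le> (\<integral>\<^sup>+x. indicator {-t-d<..-t} x + indicator {t-d..<t} x \<partial>lborel)"
    by (intro nn_integral_mono ind_diff_le[OF s1 s2])
  also have "\<dots> = emeasure lborel {-t-d<..-t} + emeasure lborel {t-d..<t}"
    by (simp add: nn_integral_add)
  also have "\<dots> = ennreal d + ennreal d"
    using True assms by simp
  also have "\<dots> = ennreal (2 * min d (2*t))"
    using True assms by (simp add: ennreal_plus[symmetric] del: ennreal_plus)
  finally show ?thesis .
next
  case False
  have s1: "{-t-d<..<t-d} - {-t<..<t} \<subseteq> {-t-d<..<t-d}" by auto
  have s2: "{-t<..<t} - {-t-d<..<t-d} \<subseteq> {-t<..<t}" by auto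
  have "(\<integral>\<^sup>+x. ennreal \<bar>indicator {-t-d<..<t-d} x - indicator {-t<..<t} x\<bar> \<partial>lborel)
     \<le> (\<integral>\<^sup>+x. indicator {-t-d<..<t-d} x + indicator {-t<..<t} x \<partial>lborel)"
    by (intro nn_integral_mono ind_diff_le[OF s1 s2])
  also have "\<dots> = emeasure lborel {-t-d<..<t-d} + emeasure lborel {-t<..<t}"
    by (simp add: nn_integral_add)
  also have "\<dots> = ennreal (2*t) + ennreal (2*t)"
    using assms by simp
  also have "\<dots> = ennreal (2 * min d (2*t))"
    using False assms by (simp add: ennreal_plus[symmetric] del: ennreal_plus)
  finally show ?thesis .
qed

lemma min_sqrt: "0 \<le> a \<Longrightarrow> 0 \<le> b \<Longrightarrow> min a b \<le> sqrt (a*b)"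
proof -
  assume "0 \<le> a" "0 \<le> b"
  then have "min a b * min a b \<le> a * b"
    by (cases "a \<le> b") (auto intro: mult_mono simp: min_def)
  then have "sqrt (min a b * min a b) \<le> sqrt (a*b)" by (rule real_sqrt_le_mono)
  then show ?thesis using \<open>0 \<le> a\<close> \<open>0 \<le> b\<close> by simp
qed

lemma outer_pt:
  fixes t d :: real assumes "d \<ge> 0"
  shows "indicator {0<..} t * (exp (-t) / (2*t)) * (2 * min d (2*t))
     \<le> sqrt (2*d) * (indicator {0..1} t * t powr (-(1/2)) + indicator {1<..} t * exp (-t))"
proof (cases "t > 0")
  case True
  have m: "min d (2*t) \<le> sqrt (2*d) * sqrt t"
    using min_sqrt[of d "2*t"] True assms by (simp add: real_sqrt_mult mult_ac)
  have "indicator {0<..} t * (exp (-t) / (2*t)) * (2 * min d (2*t)) = exp (-t) * min d (2*t) / t"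
    using True by simp
  also have "\<dots> \<le> exp (-t) * (sqrt (2*d) * sqrt t) / t"
    using True m by (intro divide_right_mono mult_left_mono) auto
  also have "\<dots> = sqrt (2*d) * (exp (-t) / sqrt t)"
    using True by (simp add: field_simps)
  also have "\<dots> \<le> sqrt (2*d) * (indicator {0..1} t * t powr (-(1/2)) + indicator {1<..} t * exp (-t))"
  proof (intro mult_left_mono)
    show "exp (-t) / sqrt t \<le> indicator {0..1} t * t powr (-(1/2)) + indicator {1<..} t * exp (-t)"
    proof (cases "t \<le> 1")
      case True2: True
      have "exp (-t) / sqrt t \<le> 1 / sqrt t"
        using True by (intro divide_right_mono) auto
      also have "\<dots> = t powr (-(1/2))"
        using True by (simp add: powr_minus_divide powr_half_sqrt)
      finally show ?thesis using True True2 by (simp add: indicator_def)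
    next
      case False
      have "exp (-t) / sqrt t \<le> exp (-t) / 1"
        using False by (intro divide_left_mono) auto
      then show ?thesis using False by (simp add: indicator_def)
    qed
  qed (use assms in auto)
  finally show ?thesis .
qed (auto simp: indicator_def)

lemma E_shift_nn:
  fixes d :: real assumes d: "d \<ge> 0"
  shows "(\<integral>\<^sup>+x. ennreal \<bar>E (x+d) - E x\<bar> \<partial>lborel) \<le> ennreal (3 * sqrt (2*d))"
proof -
  have "(\<integral>\<^sup>+x. ennreal \<bar>E (x+d) - E x\<bar> \<partial>lborel) \<le> (\<integral>\<^sup>+x. (\<integral>\<^sup>+t. ennreal \<bar>kk (x+d) t - kk x t\<bar> \<partial>lborel) \<partial>lborel)"
  proof (rule nn_integral_mono_AE)
    have "AE x in lborel. x \<noteq> 0 \<and> x \<noteq> -d"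
      using AE_lborel_singleton[of 0] AE_lborel_singleton[of "-d"] by eventually_elim auto
    then show "AE x in lborel. ennreal \<bar>E (x+d) - E x\<bar> \<le> (\<integral>\<^sup>+t. ennreal \<bar>kk (x+d) t - kk x t\<bar> \<partial>lborel)"
    proof eventually_elim
      case (elim x)
      then have x1: "x + d \<noteq> 0" "x \<noteq> 0" by auto
      have i1: "integrable lborel (kk (x+d))" "integrable lborel (kk x)"
        using kk_integrable x1 by auto
      have "E (x+d) - E x = integral\<^sup>L lborel (\<lambda>t. kk (x+d) t - kk x t)"
        using i1 x1 by (simp add: E_eq_kk)
      then have "\<bar>E (x+d) - E x\<bar> \<le> integral\<^sup>L lborel (\<lambda>t. \<bar>kk (x+d) t - kk x t\<bar>)"
        using integral_norm_bound[of lborel "\<lambda>t. kk (x+d) t - kk x t"] by simp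
      then have "ennreal \<bar>E (x+d) - E x\<bar> \<le> ennreal (integral\<^sup>L lborel (\<lambda>t. \<bar>kk (x+d) t - kk x t\<bar>))"
        by (rule ennreal_leI)
      also have "\<dots> = (\<integral>\<^sup>+t. ennreal \<bar>kk (x+d) t - kk x t\<bar> \<partial>lborel)"
        using i1 by (intro nn_integral_eq_integral[symmetric]) auto
      finally show ?case .
    qed
  qed
  also have "\<dots> = (\<integral>\<^sup>+t. (\<integral>\<^sup>+x. ennreal \<bar>kk (x+d) t - kk x t\<bar> \<partial>lborel) \<partial>lborel)"
  proof (rule lborel_pair.Fubini'[symmetric])
    have "(\<lambda>p. ennreal \<bar>kk (fst p + d) (snd p) - kk (fst p) (snd p)\<bar>) \<in> borel_measurable (lborel \<Otimes>\<^sub>M lborel)"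
      by measurable
    then show "(\<lambda>(x, t). ennreal \<bar>kk (x+d) t - kk x t\<bar>) \<in> borel_measurable (lborel \<Otimes>\<^sub>M lborel)"
      by (simp add: case_prod_unfold)
  qed
  also have "\<dots> \<le> (\<integral>\<^sup>+t. ennreal (sqrt (2*d)) * ennreal (indicator {0..1} t * t powr (-(1/2)) + indicator {1<..} t * exp (-t)) \<partial>lborel)"
  proof (rule nn_integral_mono)
    fix t :: real
    have eq: "\<And>x. ennreal \<bar>kk (x+d) t - kk x t\<bar> = ennreal (indicator {0<..} t * (exp (-t) / (2*t))) *
        ennreal \<bar>indicator {-t-d<..<t-d} x - indicator {-t<..<t} x\<bar>"
      by (auto simp: kk_def indicator_def ennreal_mult'[symmetric])
    show "(\<integral>\<^sup>+x. ennreal \<bar>kk (x+d) t - kk x t\<bar> \<partial>lborel) \<le>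
      ennreal (sqrt (2*d)) * ennreal (indicator {0..1} t * t powr (-(1/2)) + indicator {1<..} t * exp (-t))"
    proof (cases "t > 0")
      case True
      have "(\<integral>\<^sup>+x. ennreal \<bar>kk (x+d) t - kk x t\<bar> \<partial>lborel) = ennreal (indicator {0<..} t * (exp (-t) / (2*t))) *
        (\<integral>\<^sup>+x. ennreal \<bar>indicator {-t-d<..<t-d} x - indicator {-t<..<t} x\<bar> \<partial>lborel)"
        unfolding eq by (simp add: nn_integral_cmult)
      also have "\<dots> \<le> ennreal (indicator {0<..} t * (exp (-t) / (2*t))) * ennreal (2 * min d (2*t))"
        using True d by (intro mult_left_mono sym_diff_nn) auto
      also have "\<dots> = ennreal (indicator {0<..} t * (exp (-t) / (2*t)) * (2 * min d (2*t)))"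
        using True d by (simp add: ennreal_mult'[symmetric])
      also have "\<dots> \<le> ennreal (sqrt (2*d) * (indicator {0..1} t * t powr (-(1/2)) + indicator {1<..} t * exp (-t)))"
        by (intro ennreal_leI outer_pt d)
      also have "\<dots> = ennreal (sqrt (2*d)) * ennreal (indicator {0..1} t * t powr (-(1/2)) + indicator {1<..} t * exp (-t))"
        by (simp add: ennreal_mult'')
      finally show ?thesis .
    next
      case False
      then have "\<And>x. ennreal \<bar>kk (x+d) t - kk x t\<bar> = 0" by (simp add: eq)
      then show ?thesis by simp
    qed
  qed
  also have "\<dots> = ennreal (sqrt (2*d)) * (\<integral>\<^sup>+t. ennreal (indicator {0..1} t * t powr (-(1/2))) + ennreal (indicator {1<..} t * exp (-t)) \<partial>lborel)"
    by (subst nn_integral_cmult[symmetric]) (auto intro!: nn_integral_cong simp: indicator_def)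
  also have "\<dots> = ennreal (sqrt (2*d)) * (2 + (\<integral>\<^sup>+t. ennreal (indicator {1<..} t * exp (-t)) \<partial>lborel))"
    by (simp add: nn_integral_add powr_part)
  also have "\<dots> \<le> ennreal (sqrt (2*d)) * (2 + 1)"
  proof -
    have "(\<integral>\<^sup>+t. ennreal (indicator {1<..} t * exp (-t)) \<partial>lborel) \<le> (\<integral>\<^sup>+t. ennreal (exp (-1*t)) * indicator {1..} t \<partial>lborel)"
      by (intro nn_integral_mono) (auto simp: indicator_def)
    also have "\<dots> = ennreal (exp (-1))" using nn_exp_atLeast[of 1 1] by simp
    also have "\<dots> \<le> 1" by simp
    finally show ?thesis by (intro mult_left_mono add_left_mono) auto
  qed
  also have "\<dots> = ennreal (3 * sqrt (2*d))"
  proof -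
    have "ennreal (3 * sqrt (2*d)) = ennreal 3 * ennreal (sqrt (2*d))"
      by (rule ennreal_mult') simp
    then show ?thesis by (simp add: mult.commute)
  qed
  finally show ?thesis .
qed


definition Kop :: "(real \<Rightarrow> real) \<Rightarrow> real \<Rightarrow> real" where
  "Kop q t = (LINT \<eta>:{0..}|lborel. E (t - \<eta>) * q \<eta>)"

lemma abs_integral_le:
  fixes f g :: "real \<Rightarrow> real"
  assumes "integrable lborel g" "f \<in> borel_measurable lborel" "\<And>x. \<bar>f x\<bar> \<le> g x"
  shows "integrable lborel f" "\<bar>integral\<^sup>L lborel f\<bar> \<le> integral\<^sup>L lborel g"
proof -
  show i: "integrable lborel f"
    using assms by (intro Bochner_Integration.integrable_bound[OF assms(1,2)]) (auto intro: order_trans[OF _ abs_ge_self])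
  have "\<bar>integral\<^sup>L lborel f\<bar> \<le> integral\<^sup>L lborel (\<lambda>x. \<bar>f x\<bar>)"
    using integral_norm_bound[of lborel f] by simp
  also have "\<dots> \<le> integral\<^sup>L lborel g"
    using i assms by (intro integral_mono) auto
  finally show "\<bar>integral\<^sup>L lborel f\<bar> \<le> integral\<^sup>L lborel g" .
qed

lemma E_trans_integrable: "integrable lborel (\<lambda>\<eta>. E (t - \<eta>))"
  using lborel_integrable_real_affine[OF E_integrable, of "-1" t] by simp

lemma E_trans_integral: "integral\<^sup>L lborel (\<lambda>\<eta>. E (t - \<eta>)) = 1"
  using lborel_integral_real_affine[of "-1" E t] E_integral by simp

lemma E_trans_weight_integrable: "integrable lborel (\<lambda>\<eta>. E (t - \<eta>) * exp (\<bar>t - \<eta>\<bar>/2))"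
  using lborel_integrable_real_affine[OF E_weight_integrable, of "-1" t] by simp

lemma E_trans_weight_integral: "integral\<^sup>L lborel (\<lambda>\<eta>. E (t - \<eta>) * exp (\<bar>t - \<eta>\<bar>/2)) \<le> 2"
  using lborel_integral_real_affine[of "-1" "\<lambda>x. E x * exp (\<bar>x\<bar>/2)" t] E_weight_integral by simp

definition qok :: "(real \<Rightarrow> real) \<Rightarrow> real \<Rightarrow> bool" where
  "qok q B \<longleftrightarrow> (\<lambda>\<eta>. indicator {0..} \<eta> * q \<eta>) \<in> borel_measurable borel \<and> (\<forall>\<eta>\<ge>0. \<bar>q \<eta>\<bar> \<le> B)"

lemma K_integrable_full:
  assumes "qok q B"
  shows "integrable lborel (\<lambda>\<eta>. indicator {0..} \<eta> * (E (t - \<eta>) * q \<eta>))"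
    "\<bar>Kop q t\<bar> \<le> B"
proof -
  have m: "(\<lambda>\<eta>. indicator {0..} \<eta> * (E (t - \<eta>) * q \<eta>)) \<in> borel_measurable lborel"
  proof -
    have m0: "(\<lambda>\<eta>. indicator {0..} \<eta> * q \<eta>) \<in> borel_measurable borel" using assms by (simp add: qok_def)
    have "(\<lambda>\<eta>. E (t - \<eta>)) \<in> borel_measurable borel" by measurable
    then have "(\<lambda>\<eta>. E (t - \<eta>) * (indicator {0..} \<eta> * q \<eta>)) \<in> borel_measurable borel"
      using m0 by (rule borel_measurable_times)
    then show ?thesis by (simp add: mult_ac)
  qed
  have B: "B \<ge> 0" using assms unfolding qok_def by (meson abs_ge_zero order_trans order_refl)
  have b: "\<bar>indicator {0..} \<eta> * (E (t - \<eta>) * q \<eta>)\<bar> \<le> B * E (t - \<eta>)" for \<eta>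
  proof (cases "\<eta> \<ge> 0")
    case True
    then have "\<bar>q \<eta>\<bar> \<le> B" using assms unfolding qok_def by auto
    then have "E (t - \<eta>) * \<bar>q \<eta>\<bar> \<le> E (t - \<eta>) * B" using E_nonneg by (intro mult_left_mono) auto
    then show ?thesis using True E_nonneg[of "t - \<eta>"] by (simp add: abs_mult mult.commute)
  next
    case False then show ?thesis using B E_nonneg[of "t - \<eta>"] by simp
  qed
  have gi: "integrable lborel (\<lambda>\<eta>. B * E (t - \<eta>))"
    using E_trans_integrable by simp
  show "integrable lborel (\<lambda>\<eta>. indicator {0..} \<eta> * (E (t - \<eta>) * q \<eta>))"
    by (rule abs_integral_le(1)[OF gi m b])
  have "\<bar>Kop q t\<bar> \<le> integral\<^sup>L lborel (\<lambda>\<eta>. B * E (t - \<eta>))"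
    unfolding Kop_def set_lebesgue_integral_def using abs_integral_le(2)[OF gi m b] by simp
  also have "\<dots> = B" using E_trans_integral by simp
  finally show "\<bar>Kop q t\<bar> \<le> B" .
qed

lemma K_set_integrable: "qok q B \<Longrightarrow> set_integrable lborel {0..} (\<lambda>\<eta>. E (t - \<eta>) * q \<eta>)"
  using K_integrable_full(1) unfolding set_integrable_def by simp

lemma qok_diff: "qok q1 B1 \<Longrightarrow> qok q2 B2 \<Longrightarrow> qok (\<lambda>\<eta>. q1 \<eta> - q2 \<eta>) (B1 + B2)"
proof -
  assume a: "qok q1 B1" "qok q2 B2"
  have "(\<lambda>\<eta>. indicator {0..} \<eta> * q1 \<eta> - indicator {0..} \<eta> * q2 \<eta>) \<in> borel_measurable borel"
    using a unfolding qok_def by (intro borel_measurable_diff) auto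
  moreover have "\<And>\<eta>. indicator {0..} \<eta> * q1 \<eta> - indicator {0..} \<eta> * q2 \<eta> = indicator {0..} \<eta> * (q1 \<eta> - q2 \<eta>)"
    by (simp add: algebra_simps)
  moreover have "\<bar>q1 \<eta> - q2 \<eta>\<bar> \<le> B1 + B2" if "\<eta> \<ge> 0" for \<eta>
  proof -
    have "\<bar>q1 \<eta>\<bar> \<le> B1" "\<bar>q2 \<eta>\<bar> \<le> B2" using a that unfolding qok_def by auto
    then show ?thesis by linarith
  qed
  ultimately show ?thesis using a unfolding qok_def by auto
qed

lemma qok_const: "qok (\<lambda>_. L) \<bar>L\<bar>"
  unfolding qok_def by (auto simp: indicator_def) measurable

lemma K_diff: "qok q1 B1 \<Longrightarrow> qok q2 B2 \<Longrightarrow> Kop q1 t - Kop q2 t = Kop (\<lambda>\<eta>. q1 \<eta> - q2 \<eta>) t"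
  unfolding Kop_def
  using set_integral_diff(2)[OF K_set_integrable[of q1 B1 t] K_set_integrable[of q2 B2 t]]
  by (simp add: right_diff_distrib)

lemma K_const: "Kop (\<lambda>_. L) t = L * Kop (\<lambda>_. 1) t"
  unfolding Kop_def by (simp add: mult_ac)

lemma K_decay:
  assumes m: "(\<lambda>\<eta>. indicator {0..} \<eta> * q \<eta>) \<in> borel_measurable borel"
    and b: "\<And>\<eta>. \<eta> \<ge> 0 \<Longrightarrow> \<bar>q \<eta>\<bar> \<le> B * exp (-\<eta>/2)" and t: "t \<ge> 0"
  shows "\<bar>Kop q t\<bar> \<le> 2 * B * exp (-t/2)"
proof -
  have B: "B \<ge> 0" using b[of 0] by simp
  have mm: "(\<lambda>\<eta>. indicator {0..} \<eta> * (E (t - \<eta>) * q \<eta>)) \<in> borel_measurable lborel"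
  proof -
    have "(\<lambda>\<eta>. E (t - \<eta>)) \<in> borel_measurable borel" by measurable
    then have "(\<lambda>\<eta>. E (t - \<eta>) * (indicator {0..} \<eta> * q \<eta>)) \<in> borel_measurable borel"
      using m by (rule borel_measurable_times)
    then show ?thesis by (simp add: mult_ac)
  qed
  have gi: "integrable lborel (\<lambda>\<eta>. B * exp (-t/2) * (E (t - \<eta>) * exp (\<bar>t - \<eta>\<bar>/2)))"
    using E_trans_weight_integrable by simp
  have bb: "\<bar>indicator {0..} \<eta> * (E (t - \<eta>) * q \<eta>)\<bar> \<le> B * exp (-t/2) * (E (t - \<eta>) * exp (\<bar>t - \<eta>\<bar>/2))" for \<eta>
  proof (cases "\<eta> \<ge> 0")
    case True
    have "t - \<eta> \<le> \<bar>t - \<eta>\<bar>" by simp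
    then have "-\<eta>/2 \<le> -t/2 + \<bar>t - \<eta>\<bar>/2" by (simp add: field_simps)
    then have "exp (-\<eta>/2) \<le> exp (-t/2) * exp (\<bar>t - \<eta>\<bar>/2)"
      by (simp add: exp_add[symmetric])
    then have "\<bar>q \<eta>\<bar> \<le> B * (exp (-t/2) * exp (\<bar>t - \<eta>\<bar>/2))"
      using b[OF True] B by (meson mult_left_mono order_trans)
    then have "E (t - \<eta>) * \<bar>q \<eta>\<bar> \<le> E (t - \<eta>) * (B * (exp (-t/2) * exp (\<bar>t - \<eta>\<bar>/2)))"
      using E_nonneg by (intro mult_left_mono) auto
    then show ?thesis using True E_nonneg[of "t-\<eta>"] by (simp add: abs_mult mult_ac)
  next
    case False
    then show ?thesis using B E_nonneg[of "t-\<eta>"] by simp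
  qed
  have "\<bar>Kop q t\<bar> \<le> integral\<^sup>L lborel (\<lambda>\<eta>. B * exp (-t/2) * (E (t - \<eta>) * exp (\<bar>t - \<eta>\<bar>/2)))"
    unfolding Kop_def set_lebesgue_integral_def using abs_integral_le(2)[OF gi mm bb] by simp
  also have "\<dots> = B * exp (-t/2) * integral\<^sup>L lborel (\<lambda>\<eta>. E (t - \<eta>) * exp (\<bar>t - \<eta>\<bar>/2))"
    by simp
  also have "\<dots> \<le> B * exp (-t/2) * 2"
    using E_trans_weight_integral B by (intro mult_left_mono) auto
  finally show ?thesis by simp
qed


lemma K1_near:
  assumes t: "t \<ge> 0"
  shows "\<bar>1 - Kop (\<lambda>_. 1) t\<bar> \<le> 2 * exp (-t/2)"
proof -
  have i1: "integrable lborel (\<lambda>\<eta>. indicator {0..} \<eta> * (E (t - \<eta>) * 1))"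
    using K_integrable_full(1)[OF qok_const[of 1]] by simp
  have "1 - Kop (\<lambda>_. 1) t = integral\<^sup>L lborel (\<lambda>\<eta>. E (t - \<eta>)) - integral\<^sup>L lborel (\<lambda>\<eta>. indicator {0..} \<eta> * (E (t - \<eta>) * 1))"
    unfolding Kop_def set_lebesgue_integral_def E_trans_integral by simp
  also have "\<dots> = integral\<^sup>L lborel (\<lambda>\<eta>. E (t - \<eta>) - indicator {0..} \<eta> * (E (t - \<eta>) * 1))"
    using Bochner_Integration.integral_diff[OF E_trans_integrable[of t] i1] by simp
  finally have eq: "1 - Kop (\<lambda>_. 1) t = integral\<^sup>L lborel (\<lambda>\<eta>. E (t - \<eta>) - indicator {0..} \<eta> * (E (t - \<eta>) * 1))" .
  have gi: "integrable lborel (\<lambda>\<eta>. exp (-t/2) * (E (t - \<eta>) * exp (\<bar>t - \<eta>\<bar>/2)))"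
    using E_trans_weight_integrable by simp
  have m: "(\<lambda>\<eta>. E (t - \<eta>) - indicator {0..} \<eta> * (E (t - \<eta>) * 1)) \<in> borel_measurable lborel"
    by measurable
  have b: "\<bar>E (t - \<eta>) - indicator {0..} \<eta> * (E (t - \<eta>) * 1)\<bar> \<le> exp (-t/2) * (E (t - \<eta>) * exp (\<bar>t - \<eta>\<bar>/2))" for \<eta>
  proof (cases "\<eta> \<ge> 0")
    case True then show ?thesis using E_nonneg[of "t - \<eta>"] by simp
  next
    case False
    then have "0 \<le> -t/2 + \<bar>t - \<eta>\<bar>/2" using t by simp
    then have "1 \<le> exp (-t/2) * exp (\<bar>t - \<eta>\<bar>/2)" by (simp add: exp_add[symmetric])
    then have "E (t - \<eta>) * 1 \<le> E (t - \<eta>) * (exp (-t/2) * exp (\<bar>t - \<eta>\<bar>/2))"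
      using E_nonneg by (intro mult_left_mono) auto
    then show ?thesis using False E_nonneg[of "t - \<eta>"] by (simp add: mult_ac)
  qed
  have "\<bar>1 - Kop (\<lambda>_. 1) t\<bar> \<le> integral\<^sup>L lborel (\<lambda>\<eta>. exp (-t/2) * (E (t - \<eta>) * exp (\<bar>t - \<eta>\<bar>/2)))"
    unfolding eq by (rule abs_integral_le(2)[OF gi m b])
  also have "\<dots> = exp (-t/2) * integral\<^sup>L lborel (\<lambda>\<eta>. E (t - \<eta>) * exp (\<bar>t - \<eta>\<bar>/2))" by simp
  also have "\<dots> \<le> exp (-t/2) * 2"
    using E_trans_weight_integral by (intro mult_left_mono) auto
  finally show ?thesis by simp
qed

lemma K_comb:
  assumes m: "(\<lambda>\<eta>. indicator {0..} \<eta> * q \<eta>) \<in> borel_measurable borel"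
    and b: "\<And>\<eta>. \<eta> \<ge> 0 \<Longrightarrow> \<bar>q \<eta> - L\<bar> \<le> B * exp (-\<eta>/2)" and t: "t \<ge> 0"
  shows "\<bar>q t - Kop q t\<bar> \<le> (3*B + 2*\<bar>L\<bar>) * exp (-t/2)"
proof -
  have B: "B \<ge> 0" using b[of 0] by simp
  have q: "qok q (\<bar>L\<bar> + B)"
    unfolding qok_def
  proof (intro conjI allI impI m)
    fix \<eta> :: real assume "\<eta> \<ge> 0"
    have "B * exp (-\<eta>/2) \<le> B * 1" using B \<open>\<eta> \<ge> 0\<close> by (intro mult_left_mono) auto
    then show "\<bar>q \<eta>\<bar> \<le> \<bar>L\<bar> + B" using b[OF \<open>\<eta> \<ge> 0\<close>] by linarith
  qed
  have kd: "Kop q t - Kop (\<lambda>_. L) t = Kop (\<lambda>\<eta>. q \<eta> - L) t"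
    by (rule K_diff[OF q qok_const])
  have m2: "(\<lambda>\<eta>. indicator {0..} \<eta> * (q \<eta> - L)) \<in> borel_measurable borel"
  proof -
    have "(\<lambda>\<eta>. indicator {0..} \<eta> * q \<eta> - indicator {0..} \<eta> * L) \<in> borel_measurable borel"
      using m by (intro borel_measurable_diff) auto
    then show ?thesis by (simp add: right_diff_distrib)
  qed
  have k1: "\<bar>Kop (\<lambda>\<eta>. q \<eta> - L) t\<bar> \<le> 2 * B * exp (-t/2)"
    by (rule K_decay[OF m2 b t])
  have k2: "\<bar>L * (1 - Kop (\<lambda>_. 1) t)\<bar> \<le> \<bar>L\<bar> * (2 * exp (-t/2))"
    unfolding abs_mult by (intro mult_left_mono K1_near t) auto
  have "q t - Kop q t = (q t - L) - Kop (\<lambda>\<eta>. q \<eta> - L) t + L * (1 - Kop (\<lambda>_. 1) t)"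
    using kd K_const[of L t] by (simp add: algebra_simps)
  then have "\<bar>q t - Kop q t\<bar> \<le> \<bar>q t - L\<bar> + \<bar>Kop (\<lambda>\<eta>. q \<eta> - L) t\<bar> + \<bar>L * (1 - Kop (\<lambda>_. 1) t)\<bar>"
    by linarith
  also have "\<dots> \<le> B * exp (-t/2) + 2 * B * exp (-t/2) + \<bar>L\<bar> * (2 * exp (-t/2))"
    using b[OF t] k1 k2 by linarith
  also have "\<dots> = (3*B + 2*\<bar>L\<bar>) * exp (-t/2)" by (simp add: algebra_simps)
  finally show ?thesis .
qed

lemma E_shift_int:
  assumes d: "d \<ge> 0"
  shows "integrable lborel (\<lambda>s. \<bar>E (s + d) - E s\<bar>)"
    "integral\<^sup>L lborel (\<lambda>s. \<bar>E (s + d) - E s\<bar>) \<le> 3 * sqrt (2*d)"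
proof -
  have "integrable lborel (\<lambda>s. E (d + 1 * s))"
    by (rule lborel_integrable_real_affine[OF E_integrable]) simp
  then have "integrable lborel (\<lambda>s. E (s + d) - E s)"
    using E_integrable by (simp add: add.commute)
  then show i: "integrable lborel (\<lambda>s. \<bar>E (s + d) - E s\<bar>)"
    by (rule integrable_abs)
  have "ennreal (integral\<^sup>L lborel (\<lambda>s. \<bar>E (s + d) - E s\<bar>)) = (\<integral>\<^sup>+s. ennreal \<bar>E (s + d) - E s\<bar> \<partial>lborel)"
    using i by (intro nn_integral_eq_integral[symmetric]) auto
  also have "\<dots> \<le> ennreal (3 * sqrt (2*d))"
    by (rule E_shift_nn[OF d])
  finally show "integral\<^sup>L lborel (\<lambda>s. \<bar>E (s + d) - E s\<bar>) \<le> 3 * sqrt (2*d)"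
    using d by (subst (asm) ennreal_le_iff) auto
qed

lemma K_holder0:
  assumes q: "qok q B" and d: "d \<ge> 0"
  shows "\<bar>Kop q (x + d) - Kop q x\<bar> \<le> B * (3 * sqrt 2) * sqrt d"
proof -
  have B: "B \<ge> 0" using q unfolding qok_def by (meson abs_ge_zero order_trans order_refl)
  have i1: "integrable lborel (\<lambda>\<eta>. indicator {0..} \<eta> * (E (x + d - \<eta>) * q \<eta>))"
    "integrable lborel (\<lambda>\<eta>. indicator {0..} \<eta> * (E (x - \<eta>) * q \<eta>))"
    using K_integrable_full(1)[OF q] by auto
  have eq: "Kop q (x + d) - Kop q x = integral\<^sup>L lborel (\<lambda>\<eta>. indicator {0..} \<eta> * (E (x + d - \<eta>) * q \<eta>) - indicator {0..} \<eta> * (E (x - \<eta>) * q \<eta>))"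
    unfolding Kop_def set_lebesgue_integral_def using i1 by (simp add: Bochner_Integration.integral_diff)
  have gi0: "integrable lborel (\<lambda>\<eta>. \<bar>E ((x + (-1) * \<eta>) + d) - E (x + (-1) * \<eta>)\<bar>)"
    using lborel_integrable_real_affine[OF E_shift_int(1)[OF d], of "-1" x] by simp
  have gi: "integrable lborel (\<lambda>\<eta>. B * \<bar>E (x + d - \<eta>) - E (x - \<eta>)\<bar>)"
    using gi0 by (simp add: algebra_simps)
  have m: "(\<lambda>\<eta>. indicator {0..} \<eta> * (E (x + d - \<eta>) * q \<eta>) - indicator {0..} \<eta> * (E (x - \<eta>) * q \<eta>)) \<in> borel_measurable lborel"
    using i1 by (intro borel_measurable_diff borel_measurable_integrable) auto
  have b: "\<bar>indicator {0..} \<eta> * (E (x + d - \<eta>) * q \<eta>) - indicator {0..} \<eta> * (E (x - \<eta>) * q \<eta>)\<bar>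
      \<le> B * \<bar>E (x + d - \<eta>) - E (x - \<eta>)\<bar>" for \<eta>
  proof (cases "\<eta> \<ge> 0")
    case True
    then have qb: "\<bar>q \<eta>\<bar> \<le> B" using q unfolding qok_def by auto
    have "\<bar>E (x + d - \<eta>) * q \<eta> - E (x - \<eta>) * q \<eta>\<bar> = \<bar>E (x + d - \<eta>) - E (x - \<eta>)\<bar> * \<bar>q \<eta>\<bar>"
      by (simp add: left_diff_distrib[symmetric] abs_mult)
    also have "\<dots> \<le> \<bar>E (x + d - \<eta>) - E (x - \<eta>)\<bar> * B"
      using qb by (intro mult_left_mono) auto
    finally show ?thesis using True by (simp add: mult.commute)
  next
    case False then show ?thesis using B by simp
  qed
  have "\<bar>Kop q (x + d) - Kop q x\<bar> \<le> integral\<^sup>L lborel (\<lambda>\<eta>. B * \<bar>E (x + d - \<eta>) - E (x - \<eta>)\<bar>)"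
    unfolding eq by (rule abs_integral_le(2)[OF gi m b])
  also have "\<dots> = B * integral\<^sup>L lborel (\<lambda>\<eta>. \<bar>E ((x + (-1) * \<eta>) + d) - E (x + (-1) * \<eta>)\<bar>)"
    by (simp add: algebra_simps)
  also have "integral\<^sup>L lborel (\<lambda>\<eta>. \<bar>E ((x + (-1) * \<eta>) + d) - E (x + (-1) * \<eta>)\<bar>) = integral\<^sup>L lborel (\<lambda>s. \<bar>E (s + d) - E s\<bar>)"
    using lborel_integral_real_affine[of "-1" "\<lambda>s. \<bar>E (s + d) - E s\<bar>" x] by simp
  also have "B * integral\<^sup>L lborel (\<lambda>s. \<bar>E (s + d) - E s\<bar>) \<le> B * (3 * sqrt (2*d))"
    using E_shift_int(2)[OF d] B by (intro mult_left_mono) auto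
  also have "\<dots> = B * (3 * sqrt 2) * sqrt d" by (simp add: real_sqrt_mult)
  finally show ?thesis .
qed

lemma K_holder:
  assumes q: "qok q B"
  shows "\<bar>Kop q x - Kop q y\<bar> \<le> B * (3 * sqrt 2) * sqrt \<bar>x - y\<bar>"
proof (cases "x \<le> y")
  case True
  have "\<bar>Kop q (x + (y - x)) - Kop q x\<bar> \<le> B * (3 * sqrt 2) * sqrt (y - x)"
    using True by (intro K_holder0[OF q]) auto
  then show ?thesis using True by (simp add: abs_minus_commute)
next
  case False
  have "\<bar>Kop q (y + (x - y)) - Kop q y\<bar> \<le> B * (3 * sqrt 2) * sqrt (x - y)"
    using False by (intro K_holder0[OF q]) auto
  then show ?thesis using False by simp
qed


definition hok :: "(real \<Rightarrow> real) \<Rightarrow> real \<Rightarrow> bool" where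
  "hok h H \<longleftrightarrow> continuous_on {0..} h \<and> (\<forall>t\<ge>0. \<bar>h t\<bar> \<le> H * exp (-t/2))"

lemma hok_meas:
  fixes h :: "real \<Rightarrow> real"
  shows "continuous_on {0..} h \<Longrightarrow> (\<lambda>t. indicator {0..} t * h t) \<in> borel_measurable borel"
  using borel_measurable_continuous_on_indicator[of "{0..}" h] by simp

definition Gi :: "real \<Rightarrow> (real \<Rightarrow> real) \<Rightarrow> real \<Rightarrow> real" where
  "Gi c h y = (LINT t:{y<..}|lborel. exp (-c*t) * h t)"

definition Fh :: "real \<Rightarrow> (real \<Rightarrow> real) \<Rightarrow> real \<Rightarrow> real" where
  "Fh c h y = - exp (c*y) * Gi c h y"

lemma G_int:
  assumes h: "hok h H" and y: "y \<ge> 0" and c: "c \<ge> 0" and S: "S \<in> sets borel" "S \<subseteq> {y..}"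
  shows "set_integrable lborel S (\<lambda>t. exp (-c*t) * h t)"
    "\<bar>LINT t:S|lborel. exp (-c*t) * h t\<bar> \<le> exp (-c*y) * (2 * H * exp (-y/2))"
proof -
  have H: "H \<ge> 0"
  proof -
    have "\<bar>h 0\<bar> \<le> H * exp (-0/2)" using h unfolding hok_def by blast
    then show ?thesis by simp
  qed
  have e: "(\<lambda>t. indicator S t * (exp (-c*t) * h t)) = (\<lambda>t. indicator S t * exp (-c*t) * (indicator {0..} t * h t))"
    using S y by (auto simp: indicator_def fun_eq_iff)
  have m: "(\<lambda>t. indicator S t * (exp (-c*t) * h t)) \<in> borel_measurable lborel"
  proof -
    have "(\<lambda>t. indicator S t * exp (-c*t)) \<in> borel_measurable borel" using S by measurable
    moreover have "(\<lambda>t. indicator {0..} t * h t) \<in> borel_measurable borel"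
      using hok_meas h unfolding hok_def by auto
    ultimately have "(\<lambda>t. indicator S t * exp (-c*t) * (indicator {0..} t * h t)) \<in> borel_measurable borel"
      by (rule borel_measurable_times)
    then show ?thesis unfolding e by simp
  qed
  have gi: "integrable lborel (\<lambda>t. exp (-c*y) * H * (indicator {y..} t * exp (-(1/2)*t)))"
    using exp_atLeast_integral(1)[of "1/2" y] unfolding set_integrable_def by simp
  have b: "\<bar>indicator S t * (exp (-c*t) * h t)\<bar> \<le> exp (-c*y) * H * (indicator {y..} t * exp (-(1/2)*t))" for t
  proof (cases "t \<in> S")
    case True
    then have t: "t \<ge> y" using S by auto
    have "\<bar>h t\<bar> \<le> H * exp (-t/2)" using h t y unfolding hok_def by auto
    moreover have "exp (-c*t) \<le> exp (-c*y)" using t c by (simp add: mult_left_mono)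
    ultimately have "exp (-c*t) * \<bar>h t\<bar> \<le> exp (-c*y) * (H * exp (-t/2))"
      by (intro mult_mono) auto
    then show ?thesis using True t by (simp add: abs_mult mult_ac)
  next
    case False then show ?thesis using H by (simp add: indicator_def)
  qed
  show "set_integrable lborel S (\<lambda>t. exp (-c*t) * h t)"
    unfolding set_integrable_def using abs_integral_le(1)[OF gi m b] by simp
  have "\<bar>LINT t:S|lborel. exp (-c*t) * h t\<bar> \<le> integral\<^sup>L lborel (\<lambda>t. exp (-c*y) * H * (indicator {y..} t * exp (-(1/2)*t)))"
    unfolding set_lebesgue_integral_def using abs_integral_le(2)[OF gi m b] by simp
  also have "\<dots> = exp (-c*y) * H * (LINT t:{y..}|lborel. exp (-(1/2)*t))"
    unfolding set_lebesgue_integral_def by simp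
  also have "\<dots> = exp (-c*y) * (2 * H * exp (-y/2))"
    using exp_atLeast_integral(2)[of "1/2" y] by simp
  finally show "\<bar>LINT t:S|lborel. exp (-c*t) * h t\<bar> \<le> exp (-c*y) * (2 * H * exp (-y/2))" .
qed

lemma F_bound:
  assumes h: "hok h H" and y: "y \<ge> 0" and c: "c \<ge> 0"
  shows "\<bar>Fh c h y\<bar> \<le> 2 * H * exp (-y/2)"
proof -
  have "\<bar>Gi c h y\<bar> \<le> exp (-c*y) * (2 * H * exp (-y/2))"
    unfolding Gi_def by (rule G_int(2)[OF h y c]) auto
  then have "exp (c*y) * \<bar>Gi c h y\<bar> \<le> exp (c*y) * (exp (-c*y) * (2 * H * exp (-y/2)))"
    by (intro mult_left_mono) auto
  also have "\<dots> = 2 * H * exp (-y/2)" by (simp add: exp_minus field_simps)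
  finally show ?thesis unfolding Fh_def by (simp add: abs_mult)
qed

lemma integral_deriv_within:
  fixes g :: "real \<Rightarrow> real"
  assumes "continuous_on {0..} g" "y \<ge> 0"
  shows "((\<lambda>x. integral {0..x} g) has_real_derivative g y) (at y within {0..})"
proof -
  have "((\<lambda>x. integral {0..x} g) has_real_derivative g y) (at y within {0..y+1})"
    using assms by (intro integral_has_real_derivative) (auto intro: continuous_on_subset)
  moreover have "at y within {0..y+1} = at y within {0..}"
    by (rule at_within_nhd[of _ "{..<y+1}"]) (use assms in auto)
  ultimately show ?thesis by simp
qed

lemma G_split:
  assumes h: "hok h H" and y: "y \<ge> 0" and c: "c \<ge> 0"
  shows "Gi c h y = (LINT t:{0..}|lborel. exp (-c*t) * h t) - integral {0..y} (\<lambda>t. exp (-c*t) * h t)"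
proof -
  have i1: "set_integrable lborel {0..y} (\<lambda>t. exp (-c*t) * h t)"
    by (rule G_int(1)[OF h order_refl c]) auto
  have i2: "set_integrable lborel {y<..} (\<lambda>t. exp (-c*t) * h t)"
    by (rule G_int(1)[OF h order_refl c]) (use y in auto)
  have un: "{0..} = {0..y} \<union> {y<..}" using y by auto
  have "(LINT t:{0..y} \<union> {y<..}|lborel. exp (-c*t) * h t) = (LINT t:{0..y}|lborel. exp (-c*t) * h t) + (LINT t:{y<..}|lborel. exp (-c*t) * h t)"
    by (rule set_integral_Un[OF _ i1 i2]) auto
  then have "(LINT t:{0..}|lborel. exp (-c*t) * h t) = (LINT t:{0..y}|lborel. exp (-c*t) * h t) + Gi c h y"
    unfolding Gi_def un .
  moreover have "(LINT t:{0..y}|lborel. exp (-c*t) * h t) = integral {0..y} (\<lambda>t. exp (-c*t) * h t)"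
    by (rule set_borel_integral_eq_integral(2)[OF i1])
  ultimately show ?thesis by simp
qed

lemma F_deriv:
  assumes h: "hok h H" and y: "y \<ge> 0" and c: "c \<ge> 0"
  shows "(Fh c h has_real_derivative (c * Fh c h y + h y)) (at y within {0..})"
proof -
  define C0 where "C0 = (LINT t:{0..}|lborel. exp (-c*t) * h t)"
  define I where "I = (\<lambda>x. integral {0..x} (\<lambda>t. exp (-c*t) * h t))"
  have ch: "continuous_on {0..} (\<lambda>t. exp (-c*t) * h t)"
    using h unfolding hok_def by (intro continuous_intros) auto
  have dI: "(I has_real_derivative exp (-c*y) * h y) (at y within {0..})"
    using integral_deriv_within[OF ch y] unfolding I_def by simp
  have dE: "((\<lambda>x. - exp (c*x)) has_real_derivative - (c * exp (c*y))) (at y within {0..})"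
    by (auto intro!: derivative_eq_intros)
  have dC: "((\<lambda>x. C0 - I x) has_real_derivative 0 - exp (-c*y) * h y) (at y within {0..})"
    by (rule DERIV_diff[OF DERIV_const dI])
  have d: "((\<lambda>x. - exp (c*x) * (C0 - I x)) has_real_derivative
      (- (c * exp (c*y))) * (C0 - I y) + (0 - exp (-c*y) * h y) * (- exp (c*y))) (at y within {0..})"
    by (rule DERIV_mult[OF dE dC])
  have gs: "C0 - I y = Gi c h y"
    using G_split[OF h y c] unfolding C0_def I_def by simp
  have ee: "exp (-c*y) * exp (c*y) = 1" by (simp add: exp_add[symmetric])
  have e1: "(- (c * exp (c*y))) * (C0 - I y) + (0 - exp (-c*y) * h y) * (- exp (c*y)) = c * Fh c h y + h y"
    unfolding gs Fh_def using ee by (simp add: algebra_simps)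
  have "((\<lambda>x. - exp (c*x) * (C0 - I x)) has_real_derivative c * Fh c h y + h y) (at y within {0..})"
    using d e1 by simp
  then show ?thesis
  proof (rule has_field_derivative_transform_within[where d=1])
    fix x :: real assume "x \<in> {0..}"
    then show "- exp (c*x) * (C0 - I x) = Fh c h x"
      using G_split[OF h _ c, of x] unfolding Fh_def C0_def I_def by simp
  qed (use y in auto)
qed

lemma F_cont:
  assumes h: "hok h H" and c: "c \<ge> 0"
  shows "continuous_on {0..} (Fh c h)"
proof -
  have "\<forall>y\<in>{0..}. (Fh c h has_real_derivative (c * Fh c h y + h y)) (at y within {0..})"
    using F_deriv[OF h _ c] by auto
  then show ?thesis
    unfolding continuous_on_eq_continuous_within by (auto intro: DERIV_continuous)
qed

lemma F_tail:
  assumes h: "hok h H" and y: "y \<ge> 0" and c: "c \<ge> 0" and S: "S \<in> sets borel" "S \<subseteq> {y..}"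
  shows "set_integrable lborel S (Fh c h)"
    "\<bar>LINT t:S|lborel. Fh c h t\<bar> \<le> 4 * H * exp (-y/2)"
proof -
  have H: "H \<ge> 0"
  proof -
    have "\<bar>h 0\<bar> \<le> H * exp (-0/2)" using h unfolding hok_def by blast
    then show ?thesis by simp
  qed
  have m0: "(\<lambda>t. indicator {0..} t * Fh c h t) \<in> borel_measurable borel"
    using hok_meas[OF F_cont[OF h c]] .
  have e: "(\<lambda>t. indicator S t * Fh c h t) = (\<lambda>t. indicator S t * (indicator {0..} t * Fh c h t))"
    using S y by (auto simp: indicator_def fun_eq_iff)
  have m: "(\<lambda>t. indicator S t * Fh c h t) \<in> borel_measurable lborel"
  proof -
    have "(indicator S :: real \<Rightarrow> real) \<in> borel_measurable borel" using S by simp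
    from borel_measurable_times[OF this m0] show ?thesis unfolding e by simp
  qed
  have gi: "integrable lborel (\<lambda>t. 2 * H * (indicator {y..} t * exp (-(1/2)*t)))"
    using exp_atLeast_integral(1)[of "1/2" y] unfolding set_integrable_def by simp
  have b: "\<bar>indicator S t * Fh c h t\<bar> \<le> 2 * H * (indicator {y..} t * exp (-(1/2)*t))" for t
  proof (cases "t \<in> S")
    case True
    then have t: "t \<ge> y" using S by auto
    then show ?thesis using True F_bound[OF h _ c, of t] y by (simp add: mult_ac)
  next
    case False then show ?thesis using H by (simp add: indicator_def)
  qed
  show "set_integrable lborel S (Fh c h)"
    unfolding set_integrable_def using abs_integral_le(1)[OF gi m b] by simp
  have "\<bar>LINT t:S|lborel. Fh c h t\<bar> \<le> integral\<^sup>L lborel (\<lambda>t. 2 * H * (indicator {y..} t * exp (-(1/2)*t)))"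
    unfolding set_lebesgue_integral_def using abs_integral_le(2)[OF gi m b] by simp
  also have "\<dots> = 2 * H * (LINT t:{y..}|lborel. exp (-(1/2)*t))"
    unfolding set_lebesgue_integral_def by simp
  also have "\<dots> = 4 * H * exp (-y/2)"
    using exp_atLeast_integral(2)[of "1/2" y] by simp
  finally show "\<bar>LINT t:S|lborel. Fh c h t\<bar> \<le> 4 * H * exp (-y/2)" .
qed

lemma F_lin:
  assumes h1: "hok h1 H1" and h2: "hok h2 H2" and y: "y \<ge> 0" and c: "c \<ge> 0"
  shows "Fh c h1 y - Fh c h2 y = Fh c (\<lambda>t. h1 t - h2 t) y"
proof -
  have i1: "set_integrable lborel {y<..} (\<lambda>t. exp (-c*t) * h1 t)"
    by (rule G_int(1)[OF h1 y c]) auto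
  have i2: "set_integrable lborel {y<..} (\<lambda>t. exp (-c*t) * h2 t)"
    by (rule G_int(1)[OF h2 y c]) auto
  have "Gi c h1 y - Gi c h2 y = Gi c (\<lambda>t. h1 t - h2 t) y"
    unfolding Gi_def right_diff_distrib by (rule set_integral_diff(2)[OF i1 i2, symmetric])
  then show ?thesis
    unfolding Fh_def by (metis right_diff_distrib minus_mult_left)
qed

lemma hok_diff: "hok h1 H1 \<Longrightarrow> hok h2 H2 \<Longrightarrow> hok (\<lambda>t. h1 t - h2 t) (H1 + H2)"
  unfolding hok_def
proof (intro conjI allI impI)
  assume a: "continuous_on {0..} h1 \<and> (\<forall>t\<ge>0. \<bar>h1 t\<bar> \<le> H1 * exp (- t / 2))"
     "continuous_on {0..} h2 \<and> (\<forall>t\<ge>0. \<bar>h2 t\<bar> \<le> H2 * exp (- t / 2))"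
  then show "continuous_on {0..} (\<lambda>t. h1 t - h2 t)" by (intro continuous_intros) auto
  fix t :: real assume "t \<ge> 0"
  then have "\<bar>h1 t\<bar> \<le> H1 * exp (- t / 2)" "\<bar>h2 t\<bar> \<le> H2 * exp (- t / 2)" using a by auto
  then show "\<bar>h1 t - h2 t\<bar> \<le> (H1 + H2) * exp (- t / 2)" by (simp add: algebra_simps)
qed


lemma holder_cont:
  fixes g :: "real \<Rightarrow> real"
  assumes "\<And>x y. x \<in> S \<Longrightarrow> y \<in> S \<Longrightarrow> \<bar>g x - g y\<bar> \<le> C * sqrt \<bar>x - y\<bar>"
  shows "continuous_on S g"
  unfolding continuous_on_iff
proof (intro ballI allI impI)
  fix x e :: real assume x: "x \<in> S" and e: "e > 0"
  define d where "d = (e / (\<bar>C\<bar> + 1))^2"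
  have d: "d > 0" using e unfolding d_def by simp
  show "\<exists>d>0. \<forall>x'\<in>S. dist x' x < d \<longrightarrow> dist (g x') (g x) < e"
  proof (intro exI[of _ d] conjI ballI impI d)
    fix x' assume x': "x' \<in> S" and dd: "dist x' x < d"
    have "sqrt \<bar>x' - x\<bar> < sqrt d" using dd by (simp add: dist_real_def)
    also have "sqrt d = e / (\<bar>C\<bar> + 1)" unfolding d_def using e by simp
    finally have s: "sqrt \<bar>x' - x\<bar> < e / (\<bar>C\<bar> + 1)" .
    have "\<bar>g x' - g x\<bar> \<le> C * sqrt \<bar>x' - x\<bar>" using assms x x' by blast
    also have "\<dots> \<le> \<bar>C\<bar> * sqrt \<bar>x' - x\<bar>" by (intro mult_right_mono) auto
    also have "\<dots> \<le> (\<bar>C\<bar> + 1) * sqrt \<bar>x' - x\<bar>" by (intro mult_right_mono) auto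
    also have "\<dots> < (\<bar>C\<bar> + 1) * (e / (\<bar>C\<bar> + 1))"
      using s by (intro mult_strict_left_mono) auto
    also have "\<dots> = e" by simp
    finally show "dist (g x') (g x) < e" by (simp add: dist_real_def)
  qed
qed

lemma abs_prod_le:
  fixes a b R :: real assumes "\<bar>a\<bar> \<le> R" "\<bar>b\<bar> \<le> R"
  shows "\<bar>a * b\<bar> \<le> R^2"
proof -
  have "\<bar>a\<bar> * \<bar>b\<bar> \<le> R * R" by (rule mult_mono) (use assms in auto)
  then show ?thesis by (simp add: abs_mult power2_eq_square)
qed

lemma abs_prod3_le:
  fixes a b c R :: real assumes "\<bar>a\<bar> \<le> R" "\<bar>b\<bar> \<le> R" "\<bar>c\<bar> \<le> R"
  shows "\<bar>(a * b) * c\<bar> \<le> R^3"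
proof -
  have "\<bar>a * b\<bar> * \<bar>c\<bar> \<le> R^2 * R" by (rule mult_mono) (use assms abs_prod_le[OF assms(1,2)] in auto)
  then show ?thesis by (simp add: abs_mult power2_eq_square power3_eq_cube)
qed

lemma abs_cube_le:
  fixes a R :: real assumes "\<bar>a\<bar> \<le> R" shows "\<bar>a^3\<bar> \<le> R^3"
  using assms by (simp add: power_abs power_mono)

lemma pow4_diff:
  fixes a b R :: real assumes a: "\<bar>a\<bar> \<le> R" and b: "\<bar>b\<bar> \<le> R"
  shows "\<bar>a^4 - b^4\<bar> \<le> 4 * R^3 * \<bar>a - b\<bar>"
proof -
  have e: "a^4 - b^4 = (a - b) * (a^3 + (a*a)*b + a*(b*b) + b^3)" by algebra
  have R: "R \<ge> 0" using a by simp
  have t1: "\<bar>(a*a)*b\<bar> \<le> R^3" "\<bar>a*(b*b)\<bar> \<le> R^3"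
    using abs_prod3_le[OF a a b] abs_prod3_le[OF a b b] by (auto simp: mult_ac)
  have "\<bar>a^3 + (a*a)*b + a*(b*b) + b^3\<bar> \<le> \<bar>a^3\<bar> + \<bar>(a*a)*b\<bar> + \<bar>a*(b*b)\<bar> + \<bar>b^3\<bar>" by linarith
  also have "\<dots> \<le> 4 * R^3" using t1 abs_cube_le[OF a] abs_cube_le[OF b] by linarith
  finally have q: "\<bar>a^3 + (a*a)*b + a*(b*b) + b^3\<bar> \<le> 4 * R^3" .
  have "\<bar>a^4 - b^4\<bar> = \<bar>a - b\<bar> * \<bar>a^3 + (a*a)*b + a*(b*b) + b^3\<bar>" unfolding e by (simp add: abs_mult)
  also have "\<dots> \<le> \<bar>a - b\<bar> * (4 * R^3)" using q by (intro mult_left_mono) auto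
  finally show ?thesis by (simp add: mult_ac)
qed

definition Q3 :: "real \<Rightarrow> real \<Rightarrow> real" where "Q3 a b = a^3 + (a*a)*b + a*(b*b) + b^3"

lemma Q3_bound: "\<bar>a\<bar> \<le> R \<Longrightarrow> \<bar>b\<bar> \<le> R \<Longrightarrow> \<bar>Q3 a b\<bar> \<le> 4 * R^3"
proof -
  assume a: "\<bar>a\<bar> \<le> R" and b: "\<bar>b\<bar> \<le> R"
  have R: "R \<ge> 0" using a by simp
  have t1: "\<bar>(a*a)*b\<bar> \<le> R^3" "\<bar>a*(b*b)\<bar> \<le> R^3"
    using abs_prod3_le[OF a a b] abs_prod3_le[OF a b b] by (auto simp: mult_ac)
  have "\<bar>Q3 a b\<bar> \<le> \<bar>a^3\<bar> + \<bar>(a*a)*b\<bar> + \<bar>a*(b*b)\<bar> + \<bar>b^3\<bar>" unfolding Q3_def by linarith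
  also have "\<dots> \<le> 4 * R^3" using t1 abs_cube_le[OF a] abs_cube_le[OF b] by linarith
  finally show ?thesis .
qed

definition P6 :: "real \<Rightarrow> real \<Rightarrow> real \<Rightarrow> real" where
  "P6 x y z = x*x + x*y + y*y + z*x + z*y + z*z"

lemma P6_bound: "\<bar>x\<bar> \<le> R \<Longrightarrow> \<bar>y\<bar> \<le> R \<Longrightarrow> \<bar>z\<bar> \<le> R \<Longrightarrow> \<bar>P6 x y z\<bar> \<le> 6 * R^2"
proof -
  assume a: "\<bar>x\<bar> \<le> R" "\<bar>y\<bar> \<le> R" "\<bar>z\<bar> \<le> R"
  note p = abs_prod_le[OF a(1) a(1)] abs_prod_le[OF a(1) a(2)] abs_prod_le[OF a(2) a(2)]
    abs_prod_le[OF a(3) a(1)] abs_prod_le[OF a(3) a(2)] abs_prod_le[OF a(3) a(3)]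
  have "\<bar>P6 x y z\<bar> \<le> \<bar>x*x\<bar> + \<bar>x*y\<bar> + \<bar>y*y\<bar> + \<bar>z*x\<bar> + \<bar>z*y\<bar> + \<bar>z*z\<bar>"
    unfolding P6_def by (rule order_trans[OF abs_triangle_ineq] add_mono)+ auto
  then show ?thesis using p by linarith
qed

lemma Q3_lip:
  fixes a b \<alpha> \<beta> R :: real
  assumes "\<bar>a\<bar> \<le> R" "\<bar>b\<bar> \<le> R" "\<bar>\<alpha>\<bar> \<le> R" "\<bar>\<beta>\<bar> \<le> R"
  shows "\<bar>Q3 a \<alpha> - Q3 b \<beta>\<bar> \<le> 6 * R^2 * (\<bar>a - b\<bar> + \<bar>\<alpha> - \<beta>\<bar>)"
proof -
  have e1: "Q3 a \<alpha> - Q3 b \<alpha> = (a - b) * P6 a b \<alpha>" unfolding Q3_def P6_def by algebra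
  have e2: "Q3 b \<alpha> - Q3 b \<beta> = (\<alpha> - \<beta>) * P6 \<alpha> \<beta> b" unfolding Q3_def P6_def by algebra
  have "\<bar>(a - b) * P6 a b \<alpha>\<bar> \<le> \<bar>a - b\<bar> * (6 * R^2)"
    unfolding abs_mult using P6_bound[of a R b \<alpha>] assms by (intro mult_left_mono) auto
  moreover have "\<bar>(\<alpha> - \<beta>) * P6 \<alpha> \<beta> b\<bar> \<le> \<bar>\<alpha> - \<beta>\<bar> * (6 * R^2)"
    unfolding abs_mult using P6_bound[of \<alpha> R \<beta> b] assms by (intro mult_left_mono) auto
  moreover have "Q3 a \<alpha> - Q3 b \<beta> = (a - b) * P6 a b \<alpha> + (\<alpha> - \<beta>) * P6 \<alpha> \<beta> b"
    using e1 e2 by linarith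
  ultimately show ?thesis by (simp add: algebra_simps)
qed

lemma quartic_bound:
  fixes a b \<alpha> \<beta> R :: real
  assumes "\<bar>a\<bar> \<le> R" "\<bar>b\<bar> \<le> R" "\<bar>\<alpha>\<bar> \<le> R" "\<bar>\<beta>\<bar> \<le> R"
  shows "\<bar>(a^4 - b^4) - (\<alpha>^4 - \<beta>^4)\<bar> \<le> 4 * R^3 * \<bar>(a - \<alpha>) - (b - \<beta>)\<bar> + \<bar>b - \<beta>\<bar> * (6 * R^2 * (\<bar>a - b\<bar> + \<bar>\<alpha> - \<beta>\<bar>))"
proof -
  have e: "(a^4 - b^4) - (\<alpha>^4 - \<beta>^4) = ((a - \<alpha>) - (b - \<beta>)) * Q3 a \<alpha> + (b - \<beta>) * (Q3 a \<alpha> - Q3 b \<beta>)"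
    unfolding Q3_def by algebra
  have "\<bar>((a - \<alpha>) - (b - \<beta>)) * Q3 a \<alpha>\<bar> \<le> \<bar>(a - \<alpha>) - (b - \<beta>)\<bar> * (4 * R^3)"
    unfolding abs_mult using Q3_bound[of a R \<alpha>] assms by (intro mult_left_mono) auto
  moreover have "\<bar>(b - \<beta>) * (Q3 a \<alpha> - Q3 b \<beta>)\<bar> \<le> \<bar>b - \<beta>\<bar> * (6 * R^2 * (\<bar>a - b\<bar> + \<bar>\<alpha> - \<beta>\<bar>))"
    unfolding abs_mult using Q3_lip[OF assms] by (intro mult_left_mono) auto
  ultimately show ?thesis unfolding e by (simp add: mult_ac) linarith
qed


definition hop :: "(real \<Rightarrow> real) \<Rightarrow> real \<Rightarrow> real" where
  "hop u t = u t ^ 4 - Kop (\<lambda>\<eta>. u \<eta> ^ 4) t"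

definition inS :: "real \<Rightarrow> real \<Rightarrow> (real \<Rightarrow> real) \<Rightarrow> real \<Rightarrow> bool" where
  "inS eps A u L \<longleftrightarrow> continuous_on {0..} u \<and> u 0 = eps \<and> (\<forall>y\<ge>0. \<bar>u y - L\<bar> \<le> A * exp (-y/2))"

definition close :: "(real \<Rightarrow> real) \<Rightarrow> real \<Rightarrow> (real \<Rightarrow> real) \<Rightarrow> real \<Rightarrow> real \<Rightarrow> bool" where
  "close u Lu v Lv d \<longleftrightarrow> \<bar>Lu - Lv\<bar> \<le> d \<and> (\<forall>y\<ge>0. \<bar>(u y - Lu) - (v y - Lv)\<bar> \<le> d * exp (-y/2))"

definition Top :: "real \<Rightarrow> real \<Rightarrow> (real \<Rightarrow> real) \<Rightarrow> real \<Rightarrow> real" where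
  "Top c eps u y = eps + integral {0..y} (Fh c (hop u))"

definition Lop :: "real \<Rightarrow> real \<Rightarrow> (real \<Rightarrow> real) \<Rightarrow> real" where
  "Lop c eps u = eps + (LINT y:{0..}|lborel. Fh c (hop u) y)"

lemma exp_half_le1: "y \<ge> 0 \<Longrightarrow> exp (-y/2) \<le> (1::real)"
  by simp

lemma inS_bnd:
  assumes "inS eps A u L"
  shows "A \<ge> 0" "\<bar>L - eps\<bar> \<le> A" "\<bar>L\<bar> \<le> \<bar>eps\<bar> + 2*A" "\<And>y. y \<ge> 0 \<Longrightarrow> \<bar>u y\<bar> \<le> \<bar>eps\<bar> + 2*A"
    "\<And>y. y \<ge> 0 \<Longrightarrow> \<bar>u y - eps\<bar> \<le> 2*A"
proof -
  have u0: "\<bar>u 0 - L\<bar> \<le> A * exp (-0/2)" "u 0 = eps" using assms unfolding inS_def by blast+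
  then show A: "A \<ge> 0" by simp
  show L: "\<bar>L - eps\<bar> \<le> A" using u0 by simp
  then show "\<bar>L\<bar> \<le> \<bar>eps\<bar> + 2*A" using A by linarith
  fix y :: real assume y: "y \<ge> 0"
  have "\<bar>u y - L\<bar> \<le> A * exp (-y/2)" using assms y unfolding inS_def by blast
  also have "\<dots> \<le> A * 1" using A y by (intro mult_left_mono) auto
  finally have "\<bar>u y - L\<bar> \<le> A" by simp
  then show "\<bar>u y\<bar> \<le> \<bar>eps\<bar> + 2*A" "\<bar>u y - eps\<bar> \<le> 2*A" using L A by linarith+
qed

lemma q4_ok:
  assumes "continuous_on {0..} u" "\<And>y. y \<ge> 0 \<Longrightarrow> \<bar>u y\<bar> \<le> R"
  shows "qok (\<lambda>\<eta>. u \<eta> ^ 4) (R^4)"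
  unfolding qok_def
proof (intro conjI allI impI)
  show "(\<lambda>\<eta>. indicator {0..} \<eta> * u \<eta> ^ 4) \<in> borel_measurable borel"
    by (rule hok_meas) (use assms in \<open>intro continuous_intros\<close>)
  fix \<eta> :: real assume "\<eta> \<ge> 0"
  then have "\<bar>u \<eta>\<bar> ^ 4 \<le> R ^ 4" using assms by (intro power_mono) auto
  then show "\<bar>u \<eta> ^ 4\<bar> \<le> R ^ 4" by (simp add: power_abs)
qed

lemma Kop_cont:
  assumes "qok q B" shows "continuous_on S (Kop q)"
  by (rule holder_cont[where C="B * (3 * sqrt 2)"]) (rule K_holder[OF assms])

lemma hop_cont:
  assumes "continuous_on {0..} u" "\<And>y. y \<ge> 0 \<Longrightarrow> \<bar>u y\<bar> \<le> R"
  shows "continuous_on {0..} (hop u)"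
proof -
  have "continuous_on {0..} (\<lambda>t. u t ^ 4 - Kop (\<lambda>\<eta>. u \<eta> ^ 4) t)"
    using assms Kop_cont[OF q4_ok[OF assms]] by (intro continuous_intros) auto
  then show ?thesis unfolding hop_def[abs_def] .
qed

lemma hop_hok:
  assumes u: "inS eps A u L" and R: "R = \<bar>eps\<bar> + 2*A"
  shows "hok (hop u) (12 * R^3 * A + 2 * R^4)"
  unfolding hok_def
proof (intro conjI allI impI)
  note b = inS_bnd[OF u]
  have uc: "continuous_on {0..} u" using u unfolding inS_def by blast
  show "continuous_on {0..} (hop u)" by (rule hop_cont[OF uc b(4)])
  fix t :: real assume t: "t \<ge> 0"
  have q: "qok (\<lambda>\<eta>. u \<eta> ^ 4) (R^4)" using q4_ok[OF uc b(4)] R by simp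
  have m: "(\<lambda>\<eta>. indicator {0..} \<eta> * u \<eta> ^ 4) \<in> borel_measurable borel" using q unfolding qok_def by simp
  have bb: "\<bar>u \<eta> ^ 4 - L ^ 4\<bar> \<le> (4 * R^3 * A) * exp (-\<eta>/2)" if "\<eta> \<ge> 0" for \<eta>
  proof -
    have "\<bar>u \<eta> ^ 4 - L ^ 4\<bar> \<le> 4 * R^3 * \<bar>u \<eta> - L\<bar>"
      using b(3,4) that R by (intro pow4_diff) auto
    also have "\<dots> \<le> 4 * R^3 * (A * exp (-\<eta>/2))"
      using u that R b(1) unfolding inS_def by (intro mult_left_mono) auto
    finally show ?thesis by (simp add: mult_ac)
  qed
  have "\<bar>u t ^ 4 - Kop (\<lambda>\<eta>. u \<eta> ^ 4) t\<bar> \<le> (3 * (4 * R^3 * A) + 2 * \<bar>L ^ 4\<bar>) * exp (-t/2)"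
    by (rule K_comb[OF m bb t])
  also have "\<dots> \<le> (12 * R^3 * A + 2 * R^4) * exp (-t/2)"
  proof -
    have "\<bar>L\<bar> ^ 4 \<le> R ^ 4" using b(3) R by (intro power_mono) auto
    then show ?thesis by (intro mult_right_mono) (auto simp: power_abs)
  qed
  finally show "\<bar>hop u t\<bar> \<le> (12 * R^3 * A + 2 * R^4) * exp (-t/2)" unfolding hop_def .
qed

lemma hop_diff_hok:
  assumes u: "inS eps A u Lu" and v: "inS eps A v Lv" and cl: "close u Lu v Lv d"
    and R: "R = \<bar>eps\<bar> + 2*A"
  shows "hok (\<lambda>t. hop u t - hop v t) ((20 * R^3 + 54 * R^2 * A) * d)"
  unfolding hok_def
proof (intro conjI allI impI)
  note bu = inS_bnd[OF u] and bv = inS_bnd[OF v]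
  have uc: "continuous_on {0..} u" using u unfolding inS_def by blast
  have vc: "continuous_on {0..} v" using v unfolding inS_def by blast
  show "continuous_on {0..} (\<lambda>t. hop u t - hop v t)"
    using hop_cont[OF uc bu(4)] hop_cont[OF vc bv(4)] by (intro continuous_intros)
  fix t :: real assume t: "t \<ge> 0"
  have d: "d \<ge> 0" using cl unfolding close_def by (meson abs_ge_zero order_trans)
  have qu: "qok (\<lambda>\<eta>. u \<eta> ^ 4) (R^4)" using q4_ok[OF uc bu(4)] R by simp
  have qv: "qok (\<lambda>\<eta>. v \<eta> ^ 4) (R^4)" using q4_ok[OF vc bv(4)] R by simp
  have qd: "qok (\<lambda>\<eta>. u \<eta> ^ 4 - v \<eta> ^ 4) (R^4 + R^4)" by (rule qok_diff[OF qu qv])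
  have m: "(\<lambda>\<eta>. indicator {0..} \<eta> * (u \<eta> ^ 4 - v \<eta> ^ 4)) \<in> borel_measurable borel"
    using qd unfolding qok_def by simp
  have bb: "\<bar>(u \<eta> ^ 4 - v \<eta> ^ 4) - (Lu ^ 4 - Lv ^ 4)\<bar> \<le> ((4 * R^3 + 18 * R^2 * A) * d) * exp (-\<eta>/2)"
    if "\<eta> \<ge> 0" for \<eta>
  proof -
    have c1: "\<bar>(u \<eta> - Lu) - (v \<eta> - Lv)\<bar> \<le> d * exp (-\<eta>/2)" "\<bar>Lu - Lv\<bar> \<le> d"
      using cl that unfolding close_def by auto
    have c2: "\<bar>v \<eta> - Lv\<bar> \<le> A * exp (-\<eta>/2)" using v that unfolding inS_def by auto
    have e1: "exp (-\<eta>/2) \<le> 1" using that by simp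
    have c3: "\<bar>u \<eta> - v \<eta>\<bar> \<le> 2 * d"
    proof -
      have "d * exp (-\<eta>/2) \<le> d * 1" using d e1 by (intro mult_left_mono) auto
      then show ?thesis using c1 by linarith
    qed
    have "\<bar>(u \<eta> ^ 4 - v \<eta> ^ 4) - (Lu ^ 4 - Lv ^ 4)\<bar> \<le>
       4 * R^3 * \<bar>(u \<eta> - Lu) - (v \<eta> - Lv)\<bar> + \<bar>v \<eta> - Lv\<bar> * (6 * R^2 * (\<bar>u \<eta> - v \<eta>\<bar> + \<bar>Lu - Lv\<bar>))"
      using bu(3,4) bv(3,4) that R by (intro quartic_bound) auto
    also have "\<dots> \<le> 4 * R^3 * (d * exp (-\<eta>/2)) + (A * exp (-\<eta>/2)) * (6 * R^2 * (2 * d + d))"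
      using c1 c2 c3 bu(1) R by (intro add_mono mult_left_mono mult_mono) auto
    also have "\<dots> = ((4 * R^3 + 18 * R^2 * A) * d) * exp (-\<eta>/2)" by (simp add: algebra_simps)
    finally show ?thesis .
  qed
  have "\<bar>(u t ^ 4 - v t ^ 4) - Kop (\<lambda>\<eta>. u \<eta> ^ 4 - v \<eta> ^ 4) t\<bar> \<le> (3 * ((4 * R^3 + 18 * R^2 * A) * d) + 2 * \<bar>Lu ^ 4 - Lv ^ 4\<bar>) * exp (-t/2)"
    by (rule K_comb[OF m bb t])
  also have "\<dots> \<le> (3 * ((4 * R^3 + 18 * R^2 * A) * d) + 2 * (4 * R^3 * d)) * exp (-t/2)"
  proof -
    have "\<bar>Lu ^ 4 - Lv ^ 4\<bar> \<le> 4 * R^3 * \<bar>Lu - Lv\<bar>" using bu(3) bv(3) R by (intro pow4_diff) auto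
    also have "\<dots> \<le> 4 * R^3 * d" using cl R bu(1) unfolding close_def by (intro mult_left_mono) auto
    finally show ?thesis by (intro mult_right_mono add_left_mono mult_left_mono) auto
  qed
  also have "\<dots> = ((20 * R^3 + 54 * R^2 * A) * d) * exp (-t/2)" by (simp add: algebra_simps)
  finally show "\<bar>hop u t - hop v t\<bar> \<le> ((20 * R^3 + 54 * R^2 * A) * d) * exp (-t/2)"
    unfolding hop_def using K_diff[OF qu qv, of t] by (simp add: algebra_simps)
qed


lemma Top_0: "Top c eps u 0 = eps"
  unfolding Top_def by simp

lemma Top_tail:
  assumes h: "hok (hop u) H" and c: "c \<ge> 0" and y: "y \<ge> 0"
  shows "Top c eps u y - Lop c eps u = - (LINT t:{y<..}|lborel. Fh c (hop u) t)"
proof -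
  have i1: "set_integrable lborel {0..y} (Fh c (hop u))"
    by (rule F_tail(1)[OF h order_refl c]) auto
  have i2: "set_integrable lborel {y<..} (Fh c (hop u))"
    by (rule F_tail(1)[OF h y c]) auto
  have un: "{0..} = {0..y} \<union> {y<..}" using y by auto
  have "(LINT t:{0..y} \<union> {y<..}|lborel. Fh c (hop u) t) = (LINT t:{0..y}|lborel. Fh c (hop u) t) + (LINT t:{y<..}|lborel. Fh c (hop u) t)"
    by (rule set_integral_Un[OF _ i1 i2]) auto
  moreover have "(LINT t:{0..y}|lborel. Fh c (hop u) t) = integral {0..y} (Fh c (hop u))"
    by (rule set_borel_integral_eq_integral(2)[OF i1])
  ultimately show ?thesis unfolding Top_def Lop_def un by simp
qed

lemma Top_deriv:
  assumes h: "hok (hop u) H" and c: "c \<ge> 0" and y: "y \<ge> 0"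
  shows "(Top c eps u has_real_derivative Fh c (hop u) y) (at y within {0..})"
proof -
  have "((\<lambda>x. integral {0..x} (Fh c (hop u))) has_real_derivative Fh c (hop u) y) (at y within {0..})"
    by (rule integral_deriv_within[OF F_cont[OF h c] y])
  then have "((\<lambda>x. eps + integral {0..x} (Fh c (hop u))) has_real_derivative 0 + Fh c (hop u) y) (at y within {0..})"
    by (intro DERIV_add DERIV_const)
  then show ?thesis unfolding Top_def[abs_def] by simp
qed

lemma Top_cont:
  assumes h: "hok (hop u) H" and c: "c \<ge> 0"
  shows "continuous_on {0..} (Top c eps u)"
proof -
  have "\<forall>y\<in>{0..}. (Top c eps u has_real_derivative Fh c (hop u) y) (at y within {0..})"
    using Top_deriv[OF h c] by auto
  then show ?thesis
    unfolding continuous_on_eq_continuous_within by (auto intro: DERIV_continuous)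
qed

lemma T_inS:
  assumes c: "c \<ge> 0" and u: "inS eps A u L" and R: "R = \<bar>eps\<bar> + 2*A"
    and hA: "4 * (12 * R^3 * A + 2 * R^4) \<le> A"
  shows "inS eps A (Top c eps u) (Lop c eps u)"
  unfolding inS_def
proof (intro conjI allI impI)
  have h: "hok (hop u) (12 * R^3 * A + 2 * R^4)" by (rule hop_hok[OF u R])
  show "continuous_on {0..} (Top c eps u)" by (rule Top_cont[OF h c])
  show "Top c eps u 0 = eps" by (rule Top_0)
  fix y :: real assume y: "y \<ge> 0"
  have "\<bar>Top c eps u y - Lop c eps u\<bar> = \<bar>LINT t:{y<..}|lborel. Fh c (hop u) t\<bar>"
    using Top_tail[OF h c y] by simp
  also have "\<dots> \<le> 4 * (12 * R^3 * A + 2 * R^4) * exp (-y/2)"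
    by (rule F_tail(2)[OF h y c]) auto
  also have "\<dots> \<le> A * exp (-y/2)"
    using hA by (intro mult_right_mono) auto
  finally show "\<bar>Top c eps u y - Lop c eps u\<bar> \<le> A * exp (-y/2)" .
qed

lemma LINT_lin:
  assumes h1: "hok h1 H1" and h2: "hok h2 H2" and c: "c \<ge> 0" and y: "y \<ge> 0"
    and S: "S \<in> sets borel" "S \<subseteq> {y..}"
  shows "(LINT t:S|lborel. Fh c h1 t) - (LINT t:S|lborel. Fh c h2 t) = (LINT t:S|lborel. Fh c (\<lambda>t. h1 t - h2 t) t)"
proof -
  have "(LINT t:S|lborel. Fh c h1 t) - (LINT t:S|lborel. Fh c h2 t) = (LINT t:S|lborel. Fh c h1 t - Fh c h2 t)"
    by (rule set_integral_diff(2)[OF F_tail(1)[OF h1 y c S] F_tail(1)[OF h2 y c S], symmetric])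
  also have "\<dots> = (LINT t:S|lborel. Fh c (\<lambda>t. h1 t - h2 t) t)"
  proof (rule set_lebesgue_integral_cong)
    show "S \<in> sets lborel" using S by simp
    show "\<forall>t. t \<in> S \<longrightarrow> Fh c h1 t - Fh c h2 t = Fh c (\<lambda>t. h1 t - h2 t) t"
    proof (intro allI impI)
      fix t assume "t \<in> S"
      then have "t \<ge> 0" using S y by auto
      then show "Fh c h1 t - Fh c h2 t = Fh c (\<lambda>t. h1 t - h2 t) t" by (rule F_lin[OF h1 h2 _ c])
    qed
  qed
  finally show ?thesis .
qed

lemma T_contr:
  assumes c: "c \<ge> 0" and u: "inS eps A u Lu" and v: "inS eps A v Lv" and cl: "close u Lu v Lv d"
    and R: "R = \<bar>eps\<bar> + 2*A" and hc: "4 * (20 * R^3 + 54 * R^2 * A) \<le> 1/2"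
  shows "close (Top c eps u) (Lop c eps u) (Top c eps v) (Lop c eps v) (d/2)"
  unfolding close_def
proof (intro conjI allI impI)
  have d: "d \<ge> 0" using cl unfolding close_def by (meson abs_ge_zero order_trans)
  have hu: "hok (hop u) (12 * R^3 * A + 2 * R^4)" by (rule hop_hok[OF u R])
  have hv: "hok (hop v) (12 * R^3 * A + 2 * R^4)" by (rule hop_hok[OF v R])
  have hd: "hok (\<lambda>t. hop u t - hop v t) ((20 * R^3 + 54 * R^2 * A) * d)" by (rule hop_diff_hok[OF u v cl R])
  have k: "4 * ((20 * R^3 + 54 * R^2 * A) * d) \<le> d/2"
    using mult_right_mono[OF hc d] by (simp add: mult_ac)
  have l0: "(LINT t:{0..}|lborel. Fh c (hop u) t) - (LINT t:{0..}|lborel. Fh c (hop v) t) = (LINT t:{0..}|lborel. Fh c (\<lambda>t. hop u t - hop v t) t)"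
    by (rule LINT_lin[OF hu hv c order_refl]) auto
  have "Lop c eps u - Lop c eps v = (LINT t:{0..}|lborel. Fh c (\<lambda>t. hop u t - hop v t) t)"
    unfolding Lop_def using l0 by simp
  then have "\<bar>Lop c eps u - Lop c eps v\<bar> \<le> 4 * ((20 * R^3 + 54 * R^2 * A) * d) * exp (-0/2)"
    using F_tail(2)[OF hd order_refl c, of "{0..}"] by auto
  then show "\<bar>Lop c eps u - Lop c eps v\<bar> \<le> d/2" using k by simp
  fix y :: real assume y: "y \<ge> 0"
  have "(Top c eps u y - Lop c eps u) - (Top c eps v y - Lop c eps v) =
     - ((LINT t:{y<..}|lborel. Fh c (hop u) t) - (LINT t:{y<..}|lborel. Fh c (hop v) t))"
    using Top_tail[OF hu c y, of eps] Top_tail[OF hv c y, of eps] by simp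
  also have "\<dots> = - (LINT t:{y<..}|lborel. Fh c (\<lambda>t. hop u t - hop v t) t)"
  proof -
    have l: "(LINT t:{y<..}|lborel. Fh c (hop u) t) - (LINT t:{y<..}|lborel. Fh c (hop v) t) = (LINT t:{y<..}|lborel. Fh c (\<lambda>t. hop u t - hop v t) t)"
      by (rule LINT_lin[OF hu hv c y]) auto
    show ?thesis by (simp only: l)
  qed
  finally have "\<bar>(Top c eps u y - Lop c eps u) - (Top c eps v y - Lop c eps v)\<bar> = \<bar>LINT t:{y<..}|lborel. Fh c (\<lambda>t. hop u t - hop v t) t\<bar>"
    by simp
  also have "\<dots> \<le> 4 * ((20 * R^3 + 54 * R^2 * A) * d) * exp (-y/2)"
    by (rule F_tail(2)[OF hd y c]) auto
  also have "\<dots> \<le> d/2 * exp (-y/2)"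
    using k by (intro mult_right_mono) auto
  finally show "\<bar>(Top c eps u y - Lop c eps u) - (Top c eps v y - Lop c eps v)\<bar> \<le> d/2 * exp (-y/2)" .
qed


lemma geom_tail:
  fixes f :: "nat \<Rightarrow> real"
  assumes b: "\<And>n. \<bar>f (Suc n) - f n\<bar> \<le> K * (1/2)^n" and nm: "n \<le> m"
  shows "\<bar>f m - f n\<bar> \<le> 2*K*(1/2)^n - 2*K*(1/2)^m"
  using nm
proof (induction m rule: dec_induct)
  case base then show ?case by simp
next
  case (step m)
  have "\<bar>f (Suc m) - f n\<bar> \<le> \<bar>f (Suc m) - f m\<bar> + \<bar>f m - f n\<bar>" by linarith
  also have "\<dots> \<le> K * (1/2)^m + (2*K*(1/2)^n - 2*K*(1/2)^m)" using b[of m] step.IH by linarith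
  also have "\<dots> = 2*K*(1/2)^n - 2*K*(1/2)^(Suc m)" by simp
  finally show ?case .
qed

lemma geom_conv:
  fixes f :: "nat \<Rightarrow> real"
  assumes b: "\<And>n. \<bar>f (Suc n) - f n\<bar> \<le> K * (1/2)^n"
  shows "\<exists>l. f \<longlonglongrightarrow> l \<and> (\<forall>n. \<bar>l - f n\<bar> \<le> 2*K*(1/2)^n)"
proof -
  define g where "g k = f (Suc k) - f k" for k
  have K: "K \<ge> 0" using b[of 0] by simp
  have sg: "summable (\<lambda>k. K * (1/2)^k)" by (intro summable_mult summable_geometric) simp
  have s: "summable g"
    by (rule summable_comparison_test'[OF sg]) (use b in \<open>simp add: g_def\<close>)
  have e: "f n = f 0 + (\<Sum>k<n. g k)" for n
    unfolding g_def by (simp add: sum_lessThan_telescope)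
  have "(\<lambda>n. f 0 + (\<Sum>k<n. g k)) \<longlonglongrightarrow> f 0 + suminf g"
    by (intro tendsto_add tendsto_const summable_LIMSEQ s)
  then have lim: "f \<longlonglongrightarrow> f 0 + suminf g" by (simp add: e[symmetric])
  have "\<bar>(f 0 + suminf g) - f n\<bar> \<le> 2*K*(1/2)^n" for n
  proof (rule LIMSEQ_le_const2)
    show "(\<lambda>m. \<bar>f m - f n\<bar>) \<longlonglongrightarrow> \<bar>(f 0 + suminf g) - f n\<bar>"
      by (intro tendsto_intros lim)
    show "\<exists>N. \<forall>m\<ge>N. \<bar>f m - f n\<bar> \<le> 2*K*(1/2)^n"
    proof (intro exI allI impI)
      fix m assume "n \<le> m"
      then have "\<bar>f m - f n\<bar> \<le> 2*K*(1/2)^n - 2*K*(1/2)^m" by (rule geom_tail[OF b])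
      moreover have "2*K*(1/2::real)^m \<ge> 0" using K by simp
      ultimately show "\<bar>f m - f n\<bar> \<le> 2*K*(1/2)^n" by linarith
    qed
  qed
  then show ?thesis using lim by blast
qed

fun it :: "real \<Rightarrow> real \<Rightarrow> nat \<Rightarrow> (real \<Rightarrow> real) \<times> real" where
  "it c eps 0 = ((\<lambda>_. eps), eps)"
| "it c eps (Suc n) = (Top c eps (fst (it c eps n)), Lop c eps (fst (it c eps n)))"

locale params =
  fixes c eps A R :: real
  assumes c: "c \<ge> 0" and A: "A \<ge> 0" and R: "R = \<bar>eps\<bar> + 2*A"
    and hA: "4 * (12 * R^3 * A + 2 * R^4) \<le> A"
    and hc: "4 * (20 * R^3 + 54 * R^2 * A) \<le> 1/2"
begin

abbreviation "us n \<equiv> fst (it c eps n)"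
abbreviation "Ls n \<equiv> snd (it c eps n)"

lemma it_props_dummy: True by simp

lemma it_props:
  "inS eps A (us n) (Ls n) \<and> close (us n) (Ls n) (us (Suc n)) (Ls (Suc n)) (2*A*(1/2)^n)"
proof (induction n)
  case 0
  have i0: "inS eps A (us 0) (Ls 0)" unfolding inS_def using A by auto
  have i1: "inS eps A (us 1) (Ls 1)" using T_inS[OF c i0 R hA] by simp
  have "close (us 0) (Ls 0) (us 1) (Ls 1) (2*A)"
    unfolding close_def
  proof (intro conjI allI impI)
    show "\<bar>Ls 0 - Ls 1\<bar> \<le> 2*A" using inS_bnd(2)[OF i1] A by (simp add: abs_minus_commute)
    fix y :: real assume y: "y \<ge> 0"
    have "\<bar>us 1 y - Ls 1\<bar> \<le> A * exp (-y/2)" using i1 y unfolding inS_def by blast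
    also have "\<dots> \<le> 2*A * exp (-y/2)" using A by (intro mult_right_mono) auto
    finally show "\<bar>(us 0 y - Ls 0) - (us 1 y - Ls 1)\<bar> \<le> 2*A * exp (-y/2)" by simp
  qed
  then show ?case using i0 by simp
next
  case (Suc n)
  then have i: "inS eps A (us n) (Ls n)" and cl: "close (us n) (Ls n) (us (Suc n)) (Ls (Suc n)) (2*A*(1/2)^n)"
    by auto
  have i1: "inS eps A (us (Suc n)) (Ls (Suc n))" using T_inS[OF c i R hA] by simp
  have "close (us (Suc n)) (Ls (Suc n)) (us (Suc (Suc n))) (Ls (Suc (Suc n))) ((2*A*(1/2)^n)/2)"
    using T_contr[OF c i i1 cl R hc] by simp
  then show ?case using i1 by (simp add: mult_ac)
qed

end


lemma half_pow_lim: "(\<lambda>n. K * (1/2::real)^n) \<longlonglongrightarrow> 0"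
  using tendsto_mult_right_zero[OF LIMSEQ_power_zero[of "1/2::real"], of K] by simp

lemma lim_eq_by_bound:
  fixes X :: "nat \<Rightarrow> real"
  assumes "X \<longlonglongrightarrow> a" "\<And>n. \<bar>X n - b\<bar> \<le> K * (1/2)^n"
  shows "a = b"
proof -
  have "(\<lambda>n. X n - b) \<longlonglongrightarrow> 0"
    by (rule Lim_null_comparison[OF _ half_pow_lim[of K]]) (use assms(2) in auto)
  then have "X \<longlonglongrightarrow> b" by (simp add: LIM_zero_iff)
  then show ?thesis using assms(1) LIMSEQ_unique by blast
qed

context params begin

lemma fixed_point_exists:
  "\<exists>U Linf. inS eps A U Linf \<and> (\<forall>y\<ge>0. Top c eps U y = U y) \<and> Lop c eps U = Linf"
proof -
  note ip = it_props
  have iS: "inS eps A (us n) (Ls n)" for n using ip by blast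
  have cl: "close (us n) (Ls n) (us (Suc n)) (Ls (Suc n)) (2*A*(1/2)^n)" for n using ip by blast
  have dL: "\<bar>Ls (Suc n) - Ls n\<bar> \<le> 2*A*(1/2)^n" for n
    using cl[of n] unfolding close_def by (simp add: abs_minus_commute)
  obtain Linf where Linf: "Ls \<longlonglongrightarrow> Linf" "\<And>n. \<bar>Linf - Ls n\<bar> \<le> 2*(2*A)*(1/2)^n"
    using geom_conv[OF dL] by blast
  have dw: "\<bar>(us (Suc n) y - Ls (Suc n)) - (us n y - Ls n)\<bar> \<le> (2*A*exp (-y/2))*(1/2)^n" if "y \<ge> 0" for n y
    using cl[of n] that unfolding close_def by (simp add: abs_minus_commute mult_ac)
  define U where "U y = lim (\<lambda>n. us n y)" for y
  have Uconv: "(\<lambda>n. us n y - Ls n) \<longlonglongrightarrow> U y - Linf \<and> (\<forall>n. \<bar>(U y - Linf) - (us n y - Ls n)\<bar> \<le> 2*(2*A*exp (-y/2))*(1/2)^n)"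
    if y: "y \<ge> 0" for y
  proof -
    obtain l where l: "(\<lambda>n. us n y - Ls n) \<longlonglongrightarrow> l" "\<And>n. \<bar>l - (us n y - Ls n)\<bar> \<le> 2*(2*A*exp (-y/2))*(1/2)^n"
      using geom_conv[of "\<lambda>n. us n y - Ls n", OF dw[OF y]] by blast
    have "(\<lambda>n. (us n y - Ls n) + Ls n) \<longlonglongrightarrow> l + Linf" by (intro tendsto_add l Linf)
    then have "(\<lambda>n. us n y) \<longlonglongrightarrow> l + Linf" by simp
    then have "U y = l + Linf" unfolding U_def by (rule limI)
    then show ?thesis using l by simp
  qed
  have e1: "exp (-y/2) \<le> 1" if "y \<ge> 0" for y :: real using that by simp
  have unif: "\<bar>us n y - U y\<bar> \<le> 8*A*(1/2)^n" if y: "y \<ge> 0" for n y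
  proof -
    have a1: "\<bar>(U y - Linf) - (us n y - Ls n)\<bar> \<le> 2*(2*A*exp (-y/2))*(1/2)^n" using Uconv[OF y] by blast
    have "2*(2*A*exp (-y/2))*(1/2::real)^n \<le> 2*(2*A*1)*(1/2)^n"
      using e1[OF y] A by (intro mult_right_mono mult_left_mono) auto
    then show ?thesis using a1 Linf(2)[of n] by simp
  qed
  have clU: "close (us n) (Ls n) U Linf (4*A*(1/2)^n)" for n
    unfolding close_def
  proof (intro conjI allI impI)
    show "\<bar>Ls n - Linf\<bar> \<le> 4*A*(1/2)^n" using Linf(2)[of n] by (simp add: abs_minus_commute)
    fix y :: real assume y: "y \<ge> 0"
    show "\<bar>(us n y - Ls n) - (U y - Linf)\<bar> \<le> 4*A*(1/2)^n * exp (-y/2)"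
      using Uconv[OF y] by (simp add: abs_minus_commute mult_ac)
  qed
  have iU: "inS eps A U Linf"
    unfolding inS_def
  proof (intro conjI allI impI)
    show "continuous_on {0..} U"
    proof (rule uniform_limit_theorem[where f=us and F=sequentially])
      show "\<forall>\<^sub>F n in sequentially. continuous_on {0..} (us n)"
        using iS unfolding inS_def by simp
      show "uniform_limit {0..} us U sequentially"
      proof (rule uniform_limitI)
        fix e :: real assume e: "e > 0"
        have "\<forall>\<^sub>F n in sequentially. 8*A*(1/2::real)^n < e"
          using order_tendstoD(2)[OF half_pow_lim[of "8*A"] e] .
        then show "\<forall>\<^sub>F n in sequentially. \<forall>x\<in>{0..}. dist (us n x) (U x) < e"
          by eventually_elim (use unif in \<open>auto simp: dist_real_def intro: le_less_trans\<close>)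
      qed
    qed simp
    have "\<And>n. us n 0 = eps" using iS unfolding inS_def by blast
    then show "U 0 = eps" unfolding U_def by simp
    fix y :: real assume y: "y \<ge> 0"
    show "\<bar>U y - Linf\<bar> \<le> A * exp (-y/2)"
    proof (rule LIMSEQ_le_const2)
      show "(\<lambda>n. \<bar>us n y - Ls n\<bar>) \<longlonglongrightarrow> \<bar>U y - Linf\<bar>"
        using Uconv[OF y] by (intro tendsto_rabs) blast
      show "\<exists>N. \<forall>n\<ge>N. \<bar>us n y - Ls n\<bar> \<le> A * exp (-y/2)"
        using iS y unfolding inS_def by blast
    qed
  qed
  have clT: "close (us (Suc n)) (Ls (Suc n)) (Top c eps U) (Lop c eps U) (2*A*(1/2)^n)" for n
    using T_contr[OF c iS iU clU R hc, of n] by (simp add: mult_ac)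
  have LopU: "Lop c eps U = Linf"
  proof -
    have "(\<lambda>n. Ls (Suc n)) \<longlonglongrightarrow> Linf" using Linf(1) by (rule LIMSEQ_Suc)
    moreover have "\<bar>Ls (Suc n) - Lop c eps U\<bar> \<le> (2*A)*(1/2)^n" for n
      using clT[of n] unfolding close_def by (simp add: mult_ac)
    ultimately show ?thesis by (intro lim_eq_by_bound[symmetric]) auto
  qed
  have TopU: "Top c eps U y = U y" if y: "y \<ge> 0" for y
  proof -
    have "(\<lambda>n. us n y) \<longlonglongrightarrow> U y"
      by (rule Lim_null_comparison[OF _ half_pow_lim[of "8*A"], THEN LIM_zero_cancel])
         (use unif[OF y] in auto)
    then have "(\<lambda>n. us (Suc n) y) \<longlonglongrightarrow> U y" by (rule LIMSEQ_Suc)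
    moreover have "\<bar>us (Suc n) y - Top c eps U y\<bar> \<le> (4*A)*(1/2)^n" for n
    proof -
      have a: "\<bar>(us (Suc n) y - Ls (Suc n)) - (Top c eps U y - Lop c eps U)\<bar> \<le> 2*A*(1/2)^n * exp (-y/2)"
        "\<bar>Ls (Suc n) - Lop c eps U\<bar> \<le> 2*A*(1/2)^n"
        using clT[of n] y unfolding close_def by auto
      have "2*A*(1/2::real)^n * exp (-y/2) \<le> 2*A*(1/2)^n * 1"
        using e1[OF y] A by (intro mult_left_mono) auto
      then show ?thesis using a by simp
    qed
    ultimately show ?thesis by (intro lim_eq_by_bound[symmetric]) auto
  qed
  show ?thesis using iU TopU LopU by blast
qed

end


lemma inS_cong: "inS eps A u L \<Longrightarrow> (\<And>y. y \<ge> 0 \<Longrightarrow> v y = u y) \<Longrightarrow> inS eps A v L"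
proof -
  assume a: "inS eps A u L" "\<And>y. y \<ge> 0 \<Longrightarrow> v y = u y"
  have "continuous_on {0..} v = continuous_on {0..} u" by (rule continuous_on_cong) (use a(2) in auto)
  then show ?thesis using a unfolding inS_def by auto
qed

lemma close_cong: "close u Lu v Lv d \<Longrightarrow> (\<And>y. y \<ge> 0 \<Longrightarrow> u' y = u y) \<Longrightarrow> (\<And>y. y \<ge> 0 \<Longrightarrow> v' y = v y)
   \<Longrightarrow> close u' Lu v' Lv d"
  unfolding close_def by auto

lemma exp_half_lim: "((\<lambda>y::real. K * exp (-y/2)) \<longlongrightarrow> 0) at_top"
  by real_asymp

lemma inS_L_unique:
  assumes "inS eps A u L1" "inS eps A u L2" shows "L1 = L2"
proof -
  have "\<bar>L1 - L2\<bar> \<le> 0"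
  proof (rule tendsto_le[OF trivial_limit_at_top_linorder exp_half_lim[of "2*A"] tendsto_const])
    show "\<forall>\<^sub>F y in at_top. \<bar>L1 - L2\<bar> \<le> 2 * A * exp (-y/2)"
      using eventually_ge_at_top[of "0::real"]
    proof eventually_elim
      case (elim y)
      have "\<bar>u y - L1\<bar> \<le> A * exp (-y/2)" "\<bar>u y - L2\<bar> \<le> A * exp (-y/2)"
        using assms elim unfolding inS_def by auto
      then show ?case by linarith
    qed
  qed
  then show ?thesis by simp
qed

lemma lip_holder:
  fixes g :: "real \<Rightarrow> real"
  assumes lip: "\<And>x y. x \<in> S \<Longrightarrow> y \<in> S \<Longrightarrow> \<bar>g x - g y\<bar> \<le> M * \<bar>x - y\<bar>"
    and bd: "\<And>x. x \<in> S \<Longrightarrow> \<bar>g x\<bar> \<le> B" and M: "M \<ge> 0" and x: "x \<in> S" and y: "y \<in> S"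
  shows "\<bar>g x - g y\<bar> \<le> (M + 2*B) * sqrt \<bar>x - y\<bar>"
proof -
  have B: "B \<ge> 0" using bd[OF x] by simp
  show ?thesis
  proof (cases "\<bar>x - y\<bar> \<le> 1")
    case True
    have "\<bar>x - y\<bar> = sqrt \<bar>x - y\<bar> * sqrt \<bar>x - y\<bar>" by simp
    also have "\<dots> \<le> sqrt \<bar>x - y\<bar> * 1" using True by (intro mult_left_mono) auto
    finally have s: "\<bar>x - y\<bar> \<le> sqrt \<bar>x - y\<bar>" by simp
    have "\<bar>g x - g y\<bar> \<le> M * \<bar>x - y\<bar>" by (rule lip[OF x y])
    also have "\<dots> \<le> M * sqrt \<bar>x - y\<bar>" using s M by (intro mult_left_mono) auto
    also have "\<dots> \<le> (M + 2*B) * sqrt \<bar>x - y\<bar>" using B by (intro mult_right_mono) auto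
    finally show ?thesis .
  next
    case False
    then have s: "1 \<le> sqrt \<bar>x - y\<bar>" by simp
    have "\<bar>g x - g y\<bar> \<le> 2*B" using bd[OF x] bd[OF y] by linarith
    also have "\<dots> \<le> 2*B * sqrt \<bar>x - y\<bar>" using s B by (metis mult_left_mono mult.right_neutral zero_le_mult_iff zero_le_numeral)
    also have "\<dots> \<le> (M + 2*B) * sqrt \<bar>x - y\<bar>" using M by (intro mult_right_mono) auto
    finally show ?thesis .
  qed
qed

lemma Kop_cong: "(\<And>\<eta>. \<eta> \<ge> 0 \<Longrightarrow> q1 \<eta> = q2 \<eta>) \<Longrightarrow> Kop q1 t = Kop q2 t"
  unfolding Kop_def by (intro set_lebesgue_integral_cong) auto

lemma deriv_interior:
  assumes "(f has_real_derivative D) (at y within {0..})" "y > 0"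
  shows "(f has_real_derivative D) (at y)"
proof -
  have "(f has_real_derivative D) (at y within {0<..})"
    using assms(1) by (rule has_field_derivative_subset) auto
  then show ?thesis using at_within_open[of y "{0<..}"] assms(2) by simp
qed

context params begin

lemma regularity:
  assumes iU: "inS eps A U L" and fixU: "\<And>y. y \<ge> 0 \<Longrightarrow> Top c eps U y = U y" and small: "2*A \<le> eps"
  shows "solves_bvp c eps (Top c eps U)"
proof -
  define f where "f = Top c eps U"
  define H where "H = 12 * R^3 * A + 2 * R^4"
  define F1 where "F1 = Fh c (hop U)"
  define f2 where "f2 = (\<lambda>y. c * F1 y + hop U y)"
  have h: "hok (hop U) H" unfolding H_def by (rule hop_hok[OF iU R])
  have Hn: "H \<ge> 0" unfolding H_def R using A by (simp add: R)
  note bU = inS_bnd[OF iU]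
  have fU: "f y = U y" if "y \<ge> 0" for y using fixU[OF that] unfolding f_def .
  have Rn: "R \<ge> 0" using R A by simp
  have fR: "\<bar>f y\<bar> \<le> R" if "y \<ge> 0" for y using bU(4)[OF that] fU[OF that] R by simp
  have df: "(f has_real_derivative F1 y) (at y within {0..})" if "y \<ge> 0" for y
    unfolding f_def F1_def by (rule Top_deriv[OF h c that])
  have dF1: "(F1 has_real_derivative f2 y) (at y within {0..})" if "y \<ge> 0" for y
    unfolding F1_def f2_def by (rule F_deriv[OF h that c])
  have cF1: "continuous_on {0..} F1" unfolding F1_def by (rule F_cont[OF h c])
  have ch: "continuous_on {0..} (hop U)" using h unfolding hok_def by blast
  have cf2: "continuous_on {0..} f2" unfolding f2_def using cF1 ch by (intro continuous_intros)
  have F1b: "\<bar>F1 y\<bar> \<le> 2*H" if "y \<ge> 0" for y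
  proof -
    have "\<bar>F1 y\<bar> \<le> 2 * H * exp (-y/2)" unfolding F1_def by (rule F_bound[OF h that c])
    also have "\<dots> \<le> 2 * H * 1" using Hn that by (intro mult_left_mono) auto
    finally show ?thesis by simp
  qed
  have hb: "\<bar>hop U y\<bar> \<le> H" if "y \<ge> 0" for y
  proof -
    have "\<bar>hop U y\<bar> \<le> H * exp (-y/2)" using h that unfolding hok_def by blast
    also have "\<dots> \<le> H * 1" using Hn that by (intro mult_left_mono) auto
    finally show ?thesis by simp
  qed
  have f2b: "\<bar>f2 y\<bar> \<le> c * (2*H) + H" if "y \<ge> 0" for y
  proof -
    have "\<bar>f2 y\<bar> \<le> c * \<bar>F1 y\<bar> + \<bar>hop U y\<bar>" unfolding f2_def
      using abs_triangle_ineq[of "c * F1 y" "hop U y"] c by (simp add: abs_mult)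
    also have "\<dots> \<le> c * (2*H) + H" using F1b[OF that] hb[OF that] c by (intro add_mono mult_left_mono) auto
    finally show ?thesis .
  qed
  define gL where "gL = (\<lambda>y. c * F1 y + f y ^ 4)"
  define M where "M = c * (c * (2*H) + H) + 4 * R^3 * (2*H)"
  have Mn: "M \<ge> 0" unfolding M_def using c Hn Rn by simp
  have dgL: "(gL has_real_derivative (c * f2 y + 4 * f y ^ 3 * F1 y)) (at y within {0..})" if "y \<ge> 0" for y
    unfolding gL_def using dF1[OF that] df[OF that]
    by (auto intro!: derivative_eq_intros simp: power3_eq_cube)
  have dgLb: "\<bar>c * f2 y + 4 * f y ^ 3 * F1 y\<bar> \<le> M" if "y \<ge> 0" for y
  proof -
    have "\<bar>f y ^ 3\<bar> \<le> R^3" using fR[OF that] by (simp add: power_abs power_mono)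
    then have "\<bar>f y ^ 3 * F1 y\<bar> \<le> R^3 * (2*H)"
      unfolding abs_mult using F1b[OF that] Rn by (intro mult_mono) auto
    moreover have "\<bar>c * f2 y\<bar> \<le> c * (c * (2*H) + H)"
      unfolding abs_mult abs_of_nonneg[OF c] using f2b[OF that] c by (intro mult_left_mono) auto
    ultimately have t: "\<bar>f y ^ 3 * F1 y\<bar> \<le> R^3 * (2*H)" "\<bar>c * f2 y\<bar> \<le> c * (c * (2*H) + H)" by blast+
    have t3: "\<bar>c * f2 y + 4 * (f y ^ 3 * F1 y)\<bar> \<le> \<bar>c * f2 y\<bar> + \<bar>4 * (f y ^ 3 * F1 y)\<bar>"
      by (rule abs_triangle_ineq)
    have t4: "\<bar>4 * (f y ^ 3 * F1 y)\<bar> = 4 * \<bar>f y ^ 3 * F1 y\<bar>" by (simp only: abs_mult)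
    have "\<bar>c * f2 y + 4 * (f y ^ 3 * F1 y)\<bar> \<le> M" unfolding M_def using t t3 t4 by linarith
    then show ?thesis by (simp add: mult.assoc)
  qed
  have gLlip: "\<bar>gL x - gL y\<bar> \<le> M * \<bar>x - y\<bar>" if "x \<in> {0..}" "y \<in> {0..}" for x y
    using field_differentiable_bound[of "{0..}" gL "\<lambda>y. c * f2 y + 4 * f y ^ 3 * F1 y" M x y] that dgL dgLb
    by (auto simp: convex_real_interval)
  have gLb: "\<bar>gL y\<bar> \<le> c * (2*H) + R^4" if "y \<in> {0..}" for y
  proof -
    have "\<bar>f y\<bar> ^ 4 \<le> R ^ 4" using that fR by (intro power_mono) auto
    then have "\<bar>f y ^ 4\<bar> \<le> R^4" by (simp only: power_abs)
    moreover have "\<bar>c * F1 y\<bar> \<le> c * (2*H)" unfolding abs_mult abs_of_nonneg[OF c] using F1b that c by (intro mult_left_mono) auto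
    ultimately show ?thesis unfolding gL_def by linarith
  qed
  have qU: "qok (\<lambda>\<eta>. U \<eta> ^ 4) (R^4)"
    using q4_ok[of U R] iU bU(4) R unfolding inS_def by auto
  have f2eq: "f2 y = gL y - Kop (\<lambda>\<eta>. U \<eta> ^ 4) y" if "y \<ge> 0" for y
    unfolding f2_def gL_def hop_def using fU[OF that] by simp
  have hold: "\<bar>f2 x - f2 y\<bar> \<le> ((M + 2 * (c * (2*H) + R^4)) + R^4 * (3 * sqrt 2)) * sqrt \<bar>x - y\<bar>"
    if "x \<ge> 0" "y \<ge> 0" for x y
  proof -
    have "\<bar>gL x - gL y\<bar> \<le> (M + 2 * (c * (2*H) + R^4)) * sqrt \<bar>x - y\<bar>"
      by (rule lip_holder[of "{0..}" gL M "c * (2*H) + R^4" x y, OF gLlip gLb Mn]) (use that in simp_all)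
    moreover have "\<bar>Kop (\<lambda>\<eta>. U \<eta> ^ 4) x - Kop (\<lambda>\<eta>. U \<eta> ^ 4) y\<bar> \<le> R^4 * (3 * sqrt 2) * sqrt \<bar>x - y\<bar>"
      by (rule K_holder[OF qU])
    ultimately show ?thesis using f2eq[OF that(1)] f2eq[OF that(2)] by (simp add: algebra_simps) linarith
  qed
  have C2: "C2half f"
    unfolding C2half_def
  proof (rule exI[of _ F1], rule exI[of _ f2], intro conjI)
    show "\<forall>y\<ge>0. (f has_real_derivative F1 y) (at y within {0..})" using df by blast
    show "\<forall>y\<ge>0. (F1 has_real_derivative f2 y) (at y within {0..})" using dF1 by blast
    show "continuous_on {0..} f2" by (rule cf2)
    show "bounded (f ` {0..})" unfolding bounded_iff using fR by auto
    show "bounded (F1 ` {0..})" unfolding bounded_iff using F1b by auto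
    show "bounded (f2 ` {0..})" unfolding bounded_iff using f2b by auto
    show "\<exists>Hc. \<forall>x\<ge>0. \<forall>y\<ge>0. \<bar>f2 x - f2 y\<bar> \<le> Hc * sqrt \<bar>x - y\<bar>" using hold by blast
  qed
  have eq: "deriv (deriv f) y - c * deriv f y - f y ^ 4 = - (LINT \<eta>:{0..}|lborel. E (y - \<eta>) * f \<eta> ^ 4)"
    if y: "y > 0" for y
  proof -
    have d1: "deriv f x = F1 x" if "x > 0" for x
      using deriv_interior[OF df that] that by (intro DERIV_imp_deriv) auto
    have "(F1 has_real_derivative f2 y) (at y)" using deriv_interior[OF dF1 y] y by simp
    then have "(deriv f has_real_derivative f2 y) (at y)"
      by (rule has_field_derivative_transform_within_open[where S="{0<..}"]) (use y d1 in auto)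
    then have d2: "deriv (deriv f) y = f2 y" by (rule DERIV_imp_deriv)
    have k: "Kop (\<lambda>\<eta>. U \<eta> ^ 4) y = Kop (\<lambda>\<eta>. f \<eta> ^ 4) y" by (rule Kop_cong) (simp add: fU)
    show ?thesis
      unfolding d2 d1[OF y] f2_def hop_def using fU[of y] y k by (simp add: Kop_def)
  qed
  have nonneg: "f y \<ge> 0" if "y \<ge> 0" for y
    using bU(5)[OF that] fU[OF that] small by linarith
  have f0: "f 0 = eps" unfolding f_def by (rule Top_0)
  show ?thesis
    unfolding solves_bvp_def f_def[symmetric] using C2 eq nonneg f0 by auto
qed

end


lemma exp_neg_lim: "c > 0 \<Longrightarrow> ((\<lambda>Y::real. B * exp (-c*Y)) \<longlongrightarrow> 0) at_top"
  by real_asymp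

context params begin

lemma solution_fixed:
  assumes cp: "c > 0" and g: "solves_bvp c eps g" and dec: "exp_decay A g L'"
  shows "inS eps A g L' \<and> (\<forall>y\<ge>0. Top c eps g y = g y)"
proof -
  have C2: "C2half g" and geq: "\<And>y. y > 0 \<Longrightarrow> deriv (deriv g) y - c * deriv g y - g y ^ 4
             = - (LINT \<eta>:{0..}|lborel. E (y - \<eta>) * g \<eta> ^ 4)" and g0: "g 0 = eps"
    using g unfolding solves_bvp_def by auto
  obtain g1 g2 where dg: "\<And>y. y \<ge> 0 \<Longrightarrow> (g has_real_derivative g1 y) (at y within {0..})"
    and dg1: "\<And>y. y \<ge> 0 \<Longrightarrow> (g1 has_real_derivative g2 y) (at y within {0..})"
    and bg1: "bounded (g1 ` {0..})"
    using C2 unfolding C2half_def by blast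
  have cg: "continuous_on {0..} g"
    unfolding continuous_on_eq_continuous_within using dg by (auto intro: DERIV_continuous)
  have cg1: "continuous_on {0..} g1"
    unfolding continuous_on_eq_continuous_within using dg1 by (auto intro: DERIV_continuous)
  have ig: "inS eps A g L'" unfolding inS_def using cg g0 dec unfolding exp_decay_def by auto
  define H where "H = 12 * R^3 * A + 2 * R^4"
  have h: "hok (hop g) H" unfolding H_def by (rule hop_hok[OF ig R])
  obtain B1 where B1: "\<And>y. y \<ge> 0 \<Longrightarrow> \<bar>g1 y\<bar> \<le> B1" using bg1 unfolding bounded_iff by auto
  have d1: "deriv g x = g1 x" if "x > 0" for x
    using deriv_interior[OF dg that] that by (intro DERIV_imp_deriv) auto
  have g2eq: "g2 y = c * g1 y + hop g y" if y: "y > 0" for y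
  proof -
    have "(g1 has_real_derivative g2 y) (at y)" using deriv_interior[OF dg1 y] y by simp
    then have "(deriv g has_real_derivative g2 y) (at y)"
      by (rule has_field_derivative_transform_within_open[where S="{0<..}"]) (use y d1 in auto)
    then have "deriv (deriv g) y = g2 y" by (rule DERIV_imp_deriv)
    then show ?thesis using geq[OF y] d1[OF y] unfolding hop_def Kop_def by simp
  qed
  define phi where "phi x = exp (-c*x) * g1 x" for x
  have dphi: "(phi has_real_derivative exp (-c*x) * hop g x) (at x)" if x: "x > 0" for x
  proof -
    have "(g1 has_real_derivative g2 x) (at x)" using deriv_interior[OF dg1 x] x by simp
    then have "(phi has_real_derivative (- c * exp (-c*x)) * g1 x + exp (-c*x) * g2 x) (at x)"
      unfolding phi_def[abs_def] by (auto intro!: derivative_eq_intros)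
    moreover have "(- c * exp (-c*x)) * g1 x + exp (-c*x) * g2 x = exp (-c*x) * hop g x"
      using g2eq[OF x] by (simp add: algebra_simps)
    ultimately show ?thesis by simp
  qed
  have cphi: "continuous_on {0..} phi" unfolding phi_def[abs_def] using cg1 by (intro continuous_intros)
  have g1F: "g1 y = Fh c (hop g) y" if y: "y \<ge> 0" for y
  proof -
    let ?k = "\<lambda>t. exp (-c*t) * hop g t"
    have int_y: "set_integrable lborel {y..} ?k" by (rule G_int(1)[OF h y]) (use c in auto)
    have fin: "(LINT t:{y..Y}|lborel. ?k t) = phi Y - phi y" if Y: "Y \<ge> y" for Y
    proof -
      have "(?k has_integral (phi Y - phi y)) {y..Y}"
      proof (rule fundamental_theorem_of_calculus_interior[OF Y])
        show "continuous_on {y..Y} phi" by (rule continuous_on_subset[OF cphi]) (use y in auto)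
        fix x assume "x \<in> {y<..<Y}"
        then have "x > 0" using y by auto
        then show "(phi has_vector_derivative ?k x) (at x)"
          using dphi has_real_derivative_iff_has_vector_derivative by blast
      qed
      moreover have "set_integrable lborel {y..Y} ?k" by (rule G_int(1)[OF h y]) (use c in auto)
      ultimately show ?thesis using set_borel_integral_eq_integral(2) by (metis integral_unique)
    qed
    have lim1: "((\<lambda>Y. LINT t:{y..Y}|lborel. ?k t) \<longlongrightarrow> (LINT t:{y..}|lborel. ?k t)) at_top"
      by (rule tendsto_set_lebesgue_integral_at_top[OF _ int_y]) auto
    have phi0: "(phi \<longlongrightarrow> 0) at_top"
    proof (rule Lim_null_comparison[OF _ exp_neg_lim[OF cp, of B1]])
      show "\<forall>\<^sub>F Y in at_top. norm (phi Y) \<le> B1 * exp (-c*Y)"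
        using eventually_ge_at_top[of "0::real"]
        by eventually_elim (use B1 in \<open>auto simp: phi_def abs_mult mult.commute intro: mult_left_mono\<close>)
    qed
    have lim2: "((\<lambda>Y. LINT t:{y..Y}|lborel. ?k t) \<longlongrightarrow> 0 - phi y) at_top"
    proof (rule Lim_transform_eventually)
      show "((\<lambda>Y. phi Y - phi y) \<longlongrightarrow> 0 - phi y) at_top" by (intro tendsto_intros phi0)
      show "\<forall>\<^sub>F Y in at_top. phi Y - phi y = (LINT t:{y..Y}|lborel. ?k t)"
        using eventually_ge_at_top[of y] by eventually_elim (metis fin)
    qed
    have "(LINT t:{y..}|lborel. ?k t) = - phi y"
      using tendsto_unique[OF trivial_limit_at_top_linorder lim1 lim2] by simp
    moreover have "(LINT t:{y..}|lborel. ?k t) = Gi c (hop g) y"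
      unfolding Gi_def by (rule set_integral_discrete_difference[where X="{y}"]) auto
    ultimately have "phi y = - Gi c (hop g) y" by simp
    then have "exp (c*y) * phi y = Fh c (hop g) y" unfolding Fh_def by simp
    moreover have "exp (c*y) * phi y = g1 y" unfolding phi_def by (simp add: exp_minus field_simps)
    ultimately show ?thesis by simp
  qed
  have top: "Top c eps g y = g y" if y: "y \<ge> 0" for y
  proof -
    have "(g1 has_integral (g y - g 0)) {0..y}"
    proof (rule fundamental_theorem_of_calculus[OF y])
      fix x assume x: "x \<in> {0..y}"
      have "(g has_real_derivative g1 x) (at x within {0..y})"
        using dg[of x] x by (auto intro: has_field_derivative_subset)
      then show "(g has_vector_derivative g1 x) (at x within {0..y})"
        using has_real_derivative_iff_has_vector_derivative by blast
    qed
    then have "integral {0..y} g1 = g y - eps" using g0 by (simp add: integral_unique)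
    moreover have "integral {0..y} g1 = integral {0..y} (Fh c (hop g))"
      by (rule integral_cong) (use g1F in auto)
    ultimately show ?thesis unfolding Top_def by simp
  qed
  show ?thesis using ig top by blast
qed

end


context params begin

lemma main_params:
  assumes cp: "c > 0" and small: "2*A \<le> eps/2"
  shows "\<exists>f L. solves_bvp c eps f \<and> exp_decay A f L \<and>
              (\<forall>y\<ge>0. f y \<ge> (1/2) * eps) \<and> L \<ge> (1/2) * eps \<and>
              (\<forall>g. (solves_bvp c eps g \<and> (\<exists>L'. exp_decay A g L')) \<longrightarrow>
                   (\<forall>y\<ge>0. g y = f y))"
proof -
  obtain U Linf where iU: "inS eps A U Linf" and TU: "\<And>y. y \<ge> 0 \<Longrightarrow> Top c eps U y = U y"
    and LU: "Lop c eps U = Linf"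
    using fixed_point_exists by blast
  define f where "f = Top c eps U"
  have sol: "solves_bvp c eps f" unfolding f_def
    by (rule regularity[OF iU TU]) (use small A in auto)
  have iF: "inS eps A f Linf" by (rule inS_cong[OF iU]) (simp add: f_def TU)
  have dec: "exp_decay A f Linf"
    unfolding exp_decay_def
  proof (intro conjI)
    show "(f \<longlongrightarrow> Linf) at_top"
    proof (rule Lim_null_comparison[OF _ exp_half_lim[of A], THEN LIM_zero_cancel])
      show "\<forall>\<^sub>F y in at_top. norm (f y - Linf) \<le> A * exp (-y/2)"
        using eventually_ge_at_top[of "0::real"] by eventually_elim (use iF in \<open>auto simp: inS_def\<close>)
    qed
    show "\<forall>y\<ge>0. \<bar>f y - Linf\<bar> \<le> A * exp (-y/2)" using iF unfolding inS_def by blast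
  qed
  have lb: "f y \<ge> (1/2) * eps" if "y \<ge> 0" for y using inS_bnd(5)[OF iF that] small by linarith
  have lbL: "Linf \<ge> (1/2) * eps" using inS_bnd(2)[OF iF] small A by linarith
  have uniq: "\<forall>y\<ge>0. g y = f y" if g: "solves_bvp c eps g" and dg: "exp_decay A g L'" for g L'
  proof -
    have ig: "inS eps A g L'" and Tg: "\<And>y. y \<ge> 0 \<Longrightarrow> Top c eps g y = g y"
      using solution_fixed[OF cp g dg] by auto
    have Lg: "Lop c eps g = L'"
    proof (rule inS_L_unique)
      show "inS eps A (Top c eps g) (Lop c eps g)" by (rule T_inS[OF c ig R hA])
      show "inS eps A (Top c eps g) L'" by (rule inS_cong[OF ig]) (simp add: Tg)
    qed
    have cl: "close U Linf g L' (2*A*(1/2)^n)" for n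
    proof (induction n)
      case 0
      show ?case unfolding close_def
      proof (intro conjI allI impI)
        show "\<bar>Linf - L'\<bar> \<le> 2*A*(1/2)^0" using inS_bnd(2)[OF iU] inS_bnd(2)[OF ig] by simp
        fix y :: real assume y: "y \<ge> 0"
        have "\<bar>U y - Linf\<bar> \<le> A * exp (-y/2)" "\<bar>g y - L'\<bar> \<le> A * exp (-y/2)"
          using iU ig y unfolding inS_def by auto
        then show "\<bar>(U y - Linf) - (g y - L')\<bar> \<le> 2*A*(1/2)^0 * exp (-y/2)" by simp
      qed
    next
      case (Suc n)
      have "close (Top c eps U) (Lop c eps U) (Top c eps g) (Lop c eps g) ((2*A*(1/2)^n)/2)"
        by (rule T_contr[OF c iU ig Suc R hc])
      then have "close U (Lop c eps U) g (Lop c eps g) ((2*A*(1/2)^n)/2)"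
        by (rule close_cong) (simp_all add: TU Tg)
      then show ?case using LU Lg by (simp add: mult_ac)
    qed
    show ?thesis
    proof (intro allI impI)
      fix y :: real assume y: "y \<ge> 0"
      have "U y = g y"
      proof (rule lim_eq_by_bound[OF tendsto_const])
        fix n
        have a: "\<bar>Linf - L'\<bar> \<le> 2*A*(1/2)^n" "\<bar>(U y - Linf) - (g y - L')\<bar> \<le> 2*A*(1/2)^n * exp (-y/2)"
          using cl[of n] y unfolding close_def by auto
        have "2*A*(1/2::real)^n * exp (-y/2) \<le> 2*A*(1/2)^n * 1"
          using y A by (intro mult_left_mono) auto
        then show "\<bar>U y - g y\<bar> \<le> (4*A) * (1/2)^n" using a by simp
      qed
      then show "g y = f y" using TU[OF y] unfolding f_def by simp
    qed
  qed
  show ?thesis using sol dec lb lbL uniq by blast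
qed

end

lemma numerics:
  fixes e :: real assumes e0: "0 < e" and e1: "e < 1/20"
  defines "A \<equiv> e^2" and "R \<equiv> \<bar>e\<bar> + 2 * e^2"
  shows "4 * (12 * R^3 * A + 2 * R^4) \<le> A" "4 * (20 * R^3 + 54 * R^2 * A) \<le> 1/2" "2*A \<le> e/2"
proof -
  have R: "R \<le> 2*e" "R \<ge> 0" unfolding R_def using e0 e1 by (auto simp: power2_eq_square)
  have R2: "R^2 \<le> (2*e)^2" "R^3 \<le> (2*e)^3" "R^4 \<le> (2*e)^4" using power_mono[OF R] by blast+
  have E2: "e^2 \<le> (1/20)^2" and E3: "e^3 \<le> (1/20)^3" using e0 e1 by (auto intro: power_mono)
  have p: "e^2 > 0" using e0 by simp
  have "4 * (12 * R^3 * A + 2 * R^4) \<le> 4 * (12 * (2*e)^3 * e^2 + 2 * (2*e)^4)"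
    unfolding A_def using R2 p by (intro mult_left_mono add_mono mult_right_mono) auto
  also have "\<dots> = e^2 * (384 * e^3 + 128 * e^2)" by (simp add: algebra_simps power_numeral_reduce)
  also have "\<dots> \<le> e^2 * 1"
  proof (intro mult_left_mono)
    have q2: "(1/20::real)^2 = 1/400" and q3: "(1/20::real)^3 = 1/8000" by (simp_all add: power_divide)
    show "384 * e^3 + 128 * e^2 \<le> 1" using E2 E3 unfolding q2 q3 by linarith
  qed (use p in auto)
  finally show "4 * (12 * R^3 * A + 2 * R^4) \<le> A" unfolding A_def by simp
  have "4 * (20 * R^3 + 54 * R^2 * A) \<le> 4 * (20 * (2*e)^3 + 54 * (2*e)^2 * e^2)"
    unfolding A_def using R2 p by (intro mult_left_mono add_mono mult_right_mono) auto
  also have "\<dots> = 640 * e^3 + 864 * (e^2 * e^2)" by (simp add: algebra_simps power_numeral_reduce)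
  also have "\<dots> \<le> 640 * (1/20)^3 + 864 * ((1/20)^2 * (1/20)^2)"
    using E2 E3 p by (intro add_mono mult_left_mono mult_mono) auto
  also have "\<dots> \<le> 1/2" by (simp add: power_divide)
  finally show "4 * (20 * R^3 + 54 * R^2 * A) \<le> 1/2" .
  have "e^2 \<le> e * (1/20)" using e0 e1 by (simp add: power2_eq_square)
  then show "2*A \<le> e/2" unfolding A_def using p by linarith
qed

theorem theorem2p10:
  fixes c :: real
  assumes "c > 0"
  shows "\<exists>eps0>0. \<forall>eps. 0 < eps \<and> eps < eps0 \<longrightarrow>
     (\<exists>A>0. \<exists>c0. 0 < c0 \<and> c0 < 1 \<and>
       (\<exists>f L. solves_bvp c eps f \<and> exp_decay A f L \<and>
              (\<forall>y\<ge>0. f y \<ge> c0 * eps) \<and> L \<ge> c0 * eps \<and>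
              (\<forall>g. (solves_bvp c eps g \<and> (\<exists>L'. exp_decay A g L')) \<longrightarrow>
                   (\<forall>y\<ge>0. g y = f y))))"
proof (rule exI[of _ "1/20"], intro conjI allI impI)
  fix eps :: real assume e: "0 < eps \<and> eps < 1/20"
  note nm = numerics[of eps]
  interpret P: params c eps "eps^2" "\<bar>eps\<bar> + 2 * eps^2"
    by unfold_locales (use assms e nm in auto)
  have "\<exists>f L. solves_bvp c eps f \<and> exp_decay (eps^2) f L \<and>
              (\<forall>y\<ge>0. f y \<ge> (1/2) * eps) \<and> L \<ge> (1/2) * eps \<and>
              (\<forall>g. (solves_bvp c eps g \<and> (\<exists>L'. exp_decay (eps^2) g L')) \<longrightarrow>
                   (\<forall>y\<ge>0. g y = f y))"
    by (rule P.main_params[OF assms]) (use e nm in auto)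
  moreover have "eps^2 > 0" using e by simp
  ultimately show "\<exists>A>0. \<exists>c0. 0 < c0 \<and> c0 < 1 \<and>
       (\<exists>f L. solves_bvp c eps f \<and> exp_decay A f L \<and>
              (\<forall>y\<ge>0. f y \<ge> c0 * eps) \<and> L \<ge> c0 * eps \<and>
              (\<forall>g. (solves_bvp c eps g \<and> (\<exists>L'. exp_decay A g L')) \<longrightarrow>
                   (\<forall>y\<ge>0. g y = f y)))"
    by (intro exI[of _ "eps^2"] conjI exI[of _ "1/2"]) auto
qed simp

end
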